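(* Let $d_1,d_2\ge 2$ and let $\rho$ be a separable state on $\mathbb{C}^{d_1}\otimes\mathbb{C}^{d_2}$, written in Bloch form \[ \rho=\frac{1}{d_1d_2}I_{d_1}\otimes I_{d_2}+\sum_{i=1}^{d_1^2-1}r_i\lambda_i^{(d_1)}\otimes I_{d_2}+\sum_{j=1}^{d_2^2-1}s_j I_{d_1}\otimes\lambda_j^{(d_2)}+\sum_{i=1}^{d_1^2-1}\sum_{j=1}^{d_2^2-1}T_{ij}\lambda_i^{(d_1)}\otimes\lambda_j^{(d_2)}. \] Let $a_k={\rm Tr}\big((TT^{\dagger})^{k/2}\big)$ and $b_k={\rm Tr}\big((\tilde T\tilde T^{\dagger})^{k/2}\big)$. Then \[ a_2^2\le \frac{\sqrt{(d_1^2-d_1)(d_2^2-d_2)}}{2d_1d_2}\,a_3, \qquad b_2^2\le \frac{\sqrt{(2+d_1^2-d_1)(2+d_2^2-d_2)}}{2d_1d_2}\,b_3 . \]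
   Context: For $d\ge2$, $\lambda_1^{(d)},\dots,\lambda_{d^2-1}^{(d)}$ are traceless Hermitian generators of $\mathfrak{su}(d)$ with ${\rm Tr}(\lambda_i^{(d)}\lambda_j^{(d)})=2\delta_{ij}$. The Bloch coefficients of a state $\rho$ on $\mathbb{C}^{d_1}\otimes\mathbb{C}^{d_2}$ are $r_i=\frac{1}{2d_2}{\rm Tr}(\rho\,\lambda_i^{(d_1)}\otimes I_{d_2})$, $s_j=\frac{1}{2d_1}{\rm Tr}(\rho\, I_{d_1}\otimes\lambda_j^{(d_2)})$, $T_{ij}=\frac14{\rm Tr}(\rho\,\lambda_i^{(d_1)}\otimes\lambda_j^{(d_2)})$. The correlation matrix is $T=(T_{ij})$, of size $(d_1^2-1)\times(d_2^2-1)$. With $\mathbf r=(r_1,\dots,r_{d_1^2-1})^t$ and $\mathbf s=(s_1,\dots,s_{d_2^2-1})^t$, the canonical correlation matrix is the $d_1^2\times d_2^2$ matrix $\tilde T=\begin{pmatrix}\frac{1}{d_1d_2}&\mathbf s^t\\ \mathbf r& T\end{pmatrix}$. A state is separable if it is a convex combination of product states $\rho_A\otimes\rho_B$. *)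

theory Defs
  imports "Jordan_Normal_Form.Schur_Decomposition"
begin

definition mtrace :: "complex mat \<Rightarrow> complex" where
  "mtrace A = (\<Sum>i<dim_row A. A $$ (i, i))"

definition kron :: "complex mat \<Rightarrow> complex mat \<Rightarrow> complex mat" where
  "kron A B = mat (dim_row A * dim_row B) (dim_col A * dim_col B)
     (\<lambda>(i, j). A $$ (i div dim_row B, j div dim_col B) * B $$ (i mod dim_row B, j mod dim_col B))"

definition hermitian :: "complex mat \<Rightarrow> bool" where
  "hermitian A \<longleftrightarrow> mat_adjoint A = A"

definition psd :: "nat \<Rightarrow> complex mat \<Rightarrow> bool" where
  "psd n A \<longleftrightarrow> A \<in> carrier_mat n n \<and> hermitian A \<and>
     (\<forall>v \<in> carrier_vec n. 0 \<le> Re ((A *\<^sub>v v) \<bullet>c v))"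

definition is_state :: "nat \<Rightarrow> complex mat \<Rightarrow> bool" where
  "is_state n \<rho> \<longleftrightarrow> psd n \<rho> \<and> mtrace \<rho> = 1"

definition separable :: "nat \<Rightarrow> nat \<Rightarrow> complex mat \<Rightarrow> bool" where
  "separable d1 d2 \<rho> \<longleftrightarrow>
     (\<exists>(m::nat) (p::nat \<Rightarrow> real) A B.
        (\<forall>k<m. 0 \<le> p k \<and> is_state d1 (A k) \<and> is_state d2 (B k)) \<and>
        (\<Sum>k<m. p k) = 1 \<and>
        \<rho> = mat (d1 * d2) (d1 * d2)
               (\<lambda>ij. \<Sum>k<m. complex_of_real (p k) * kron (A k) (B k) $$ ij))"

definition su_generators :: "nat \<Rightarrow> (nat \<Rightarrow> complex mat) \<Rightarrow> bool" where
  "su_generators d L \<longleftrightarrow>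
     (\<forall>i < d^2 - 1. L i \<in> carrier_mat d d \<and> hermitian (L i) \<and> mtrace (L i) = 0 \<and>
        (\<forall>j < d^2 - 1. mtrace (L i * L j) = (if i = j then 2 else 0)))"

text \<open>Bloch coefficients (indices shifted to start at 0).\<close>
definition bloch_r :: "nat \<Rightarrow> nat \<Rightarrow> (nat \<Rightarrow> complex mat) \<Rightarrow> complex mat \<Rightarrow> nat \<Rightarrow> complex" where
  "bloch_r d1 d2 L1 \<rho> i = mtrace (\<rho> * kron (L1 i) (1\<^sub>m d2)) / (2 * of_nat d2)"

definition bloch_s :: "nat \<Rightarrow> nat \<Rightarrow> (nat \<Rightarrow> complex mat) \<Rightarrow> complex mat \<Rightarrow> nat \<Rightarrow> complex" where
  "bloch_s d1 d2 L2 \<rho> j = mtrace (\<rho> * kron (1\<^sub>m d1) (L2 j)) / (2 * of_nat d1)"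

definition corr_mat :: "nat \<Rightarrow> nat \<Rightarrow> (nat \<Rightarrow> complex mat) \<Rightarrow> (nat \<Rightarrow> complex mat) \<Rightarrow> complex mat \<Rightarrow> complex mat" where
  "corr_mat d1 d2 L1 L2 \<rho> = mat (d1^2 - 1) (d2^2 - 1)
     (\<lambda>(i, j). mtrace (\<rho> * kron (L1 i) (L2 j)) / 4)"

text \<open>Canonical correlation matrix T~ = [[1/(d1 d2), s^t], [r, T]], of size d1^2 x d2^2.\<close>
definition canon_corr_mat :: "nat \<Rightarrow> nat \<Rightarrow> (nat \<Rightarrow> complex mat) \<Rightarrow> (nat \<Rightarrow> complex mat) \<Rightarrow> complex mat \<Rightarrow> complex mat" where
  "canon_corr_mat d1 d2 L1 L2 \<rho> = mat (d1^2) (d2^2)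
     (\<lambda>(i, j). if i = 0 \<and> j = 0 then 1 / (of_nat d1 * of_nat d2)
              else if i = 0 then bloch_s d1 d2 L2 \<rho> (j - 1)
              else if j = 0 then bloch_r d1 d2 L1 \<rho> (i - 1)
              else corr_mat d1 d2 L1 L2 \<rho> $$ (i - 1, j - 1))"

definition psd_sqrt :: "complex mat \<Rightarrow> complex mat" where
  "psd_sqrt A = (THE B. psd (dim_row A) B \<and> B * B = A)"

text \<open>Ky-Fan type quantity Tr((M M^dagger)^(k/2)), with (X)^(k/2) = (X^(1/2))^k.\<close>
definition tr_half_pow :: "complex mat \<Rightarrow> nat \<Rightarrow> real" where
  "tr_half_pow M k = Re (mtrace (psd_sqrt (M * mat_adjoint M) ^\<^sub>m k))"

end

theory Submission
  imports Defs
begin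

lemma cs_real: fixes a b :: "'i \<Rightarrow> real" assumes "finite I"
  shows "(\<Sum>i\<in>I. a i * b i)^2 \<le> (\<Sum>i\<in>I. (a i)^2) * (\<Sum>i\<in>I. (b i)^2)"
proof -
  have "0 \<le> (\<Sum>i\<in>I. \<Sum>j\<in>I. (a i * b j - a j * b i)^2)" by (intro sum_nonneg) auto
  also have "\<dots> = (\<Sum>i\<in>I. \<Sum>j\<in>I. (a i)^2 * (b j)^2 + (a j)^2 * (b i)^2 - 2 * ((a i * b i) * (a j * b j)))"
    by (intro sum.cong refl) (simp add: power2_eq_square algebra_simps)
  also have "\<dots> = (\<Sum>i\<in>I. \<Sum>j\<in>I. (a i)^2 * (b j)^2) + (\<Sum>i\<in>I. \<Sum>j\<in>I. (a j)^2 * (b i)^2)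
       - 2 * (\<Sum>i\<in>I. \<Sum>j\<in>I. (a i * b i) * (a j * b j))"
    by (simp add: sum.distrib sum_subtractf sum_distrib_left)
  also have "(\<Sum>i\<in>I. \<Sum>j\<in>I. (a j)^2 * (b i)^2) = (\<Sum>i\<in>I. \<Sum>j\<in>I. (a i)^2 * (b j)^2)"
    by (rule sum.swap)
  also have "(\<Sum>i\<in>I. \<Sum>j\<in>I. (a i)^2 * (b j)^2) = (\<Sum>i\<in>I. (a i)^2) * (\<Sum>i\<in>I. (b i)^2)"
    by (rule sum_product[symmetric])
  also have "(\<Sum>i\<in>I. \<Sum>j\<in>I. (a i * b i) * (a j * b j)) = (\<Sum>i\<in>I. a i * b i)^2"
    by (simp add: sum_product[symmetric] power2_eq_square)
  finally show ?thesis by simp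
qed

lemma cs_complex: fixes a b :: "'i \<Rightarrow> complex" assumes "finite I"
  shows "cmod (\<Sum>i\<in>I. a i * b i) \<le> sqrt (\<Sum>i\<in>I. (cmod (a i))^2) * sqrt (\<Sum>i\<in>I. (cmod (b i))^2)"
proof -
  have "cmod (\<Sum>i\<in>I. a i * b i) \<le> (\<Sum>i\<in>I. cmod (a i) * cmod (b i))"
    by (rule order_trans[OF norm_sum]) (simp add: norm_mult)
  also have "\<dots> \<le> sqrt (\<Sum>i\<in>I. (cmod (a i))^2) * sqrt (\<Sum>i\<in>I. (cmod (b i))^2)"
  proof -
    have "(\<Sum>i\<in>I. cmod (a i) * cmod (b i))^2 \<le> (\<Sum>i\<in>I. (cmod (a i))^2) * (\<Sum>i\<in>I. (cmod (b i))^2)"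
      by (rule cs_real[OF assms])
    then have "sqrt ((\<Sum>i\<in>I. cmod (a i) * cmod (b i))^2) \<le> sqrt ((\<Sum>i\<in>I. (cmod (a i))^2) * (\<Sum>i\<in>I. (cmod (b i))^2))"
      by (rule real_sqrt_le_mono)
    moreover have "(\<Sum>i\<in>I. cmod (a i) * cmod (b i)) \<ge> 0" by (intro sum_nonneg) auto
    ultimately show ?thesis by (simp add: real_sqrt_mult)
  qed
  finally show ?thesis .
qed

lemma bessel: fixes x :: "'j \<Rightarrow> complex" and f :: "'i \<Rightarrow> 'j \<Rightarrow> complex"
  assumes J: "finite J" and I: "finite I"
    and orth: "\<And>i l. i \<in> I \<Longrightarrow> l \<in> I \<Longrightarrow> (\<Sum>j\<in>J. f i j * cnj (f l j)) = (if i = l then 1 else 0)"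
  shows "(\<Sum>i\<in>I. (cmod (\<Sum>j\<in>J. x j * cnj (f i j)))^2) \<le> (\<Sum>j\<in>J. (cmod (x j))^2)"
proof -
  define c where "c i = (\<Sum>j\<in>J. x j * cnj (f i j))" for i
  define r where "r j = x j - (\<Sum>i\<in>I. c i * f i j)" for j
  have cc: "(\<Sum>j\<in>J. (\<Sum>i\<in>I. c i * f i j) * cnj (\<Sum>l\<in>I. c l * f l j)) = (\<Sum>i\<in>I. c i * cnj (c i))"
  proof -
    have "(\<Sum>j\<in>J. (\<Sum>i\<in>I. c i * f i j) * cnj (\<Sum>l\<in>I. c l * f l j))
        = (\<Sum>j\<in>J. \<Sum>l\<in>I. \<Sum>i\<in>I. c i * (cnj (c l) * (f i j * cnj (f l j))))"
      by (simp add: sum_distrib_left sum_distrib_right mult_ac)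
    also have "\<dots> = (\<Sum>l\<in>I. \<Sum>j\<in>J. \<Sum>i\<in>I. c i * (cnj (c l) * (f i j * cnj (f l j))))"
      by (rule sum.swap)
    also have "\<dots> = (\<Sum>l\<in>I. \<Sum>i\<in>I. \<Sum>j\<in>J. c i * (cnj (c l) * (f i j * cnj (f l j))))"
      by (intro sum.cong refl) (rule sum.swap)
    also have "\<dots> = (\<Sum>i\<in>I. \<Sum>l\<in>I. \<Sum>j\<in>J. c i * (cnj (c l) * (f i j * cnj (f l j))))"
      by (rule sum.swap)
    also have "\<dots> = (\<Sum>i\<in>I. \<Sum>l\<in>I. c i * cnj (c l) * (\<Sum>j\<in>J. f i j * cnj (f l j)))"
      by (simp add: sum_distrib_left mult_ac)
    also have "\<dots> = (\<Sum>i\<in>I. \<Sum>l\<in>I. if l = i then c i * cnj (c l) else 0)"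
      by (intro sum.cong refl) (auto simp: orth)
    also have "\<dots> = (\<Sum>i\<in>I. c i * cnj (c i))" using I by (simp add: sum.delta)
    finally show ?thesis .
  qed
  have xc: "(\<Sum>j\<in>J. x j * cnj (\<Sum>l\<in>I. c l * f l j)) = (\<Sum>i\<in>I. c i * cnj (c i))"
  proof -
    have "(\<Sum>j\<in>J. x j * cnj (\<Sum>l\<in>I. c l * f l j)) = (\<Sum>l\<in>I. cnj (c l) * (\<Sum>j\<in>J. x j * cnj (f l j)))"
      by (simp add: sum_distrib_left sum.swap[of _ J] mult_ac)
    also have "\<dots> = (\<Sum>i\<in>I. c i * cnj (c i))" by (simp add: c_def mult.commute)
    finally show ?thesis .
  qed
  have cx: "(\<Sum>j\<in>J. (\<Sum>i\<in>I. c i * f i j) * cnj (x j)) = (\<Sum>i\<in>I. c i * cnj (c i))"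
  proof -
    have "(\<Sum>j\<in>J. (\<Sum>i\<in>I. c i * f i j) * cnj (x j)) = cnj (\<Sum>j\<in>J. x j * cnj (\<Sum>l\<in>I. c l * f l j))"
      by (simp add: mult.commute)
    also have "\<dots> = (\<Sum>i\<in>I. c i * cnj (c i))" unfolding xc
      by (simp add: mult.commute)
    finally show ?thesis .
  qed
  have "(\<Sum>j\<in>J. r j * cnj (r j)) = (\<Sum>j\<in>J. x j * cnj (x j)) - (\<Sum>i\<in>I. c i * cnj (c i))"
  proof -
    have "(\<Sum>j\<in>J. r j * cnj (r j)) = (\<Sum>j\<in>J. x j * cnj (x j)) - (\<Sum>j\<in>J. x j * cnj (\<Sum>l\<in>I. c l * f l j))
       - (\<Sum>j\<in>J. (\<Sum>i\<in>I. c i * f i j) * cnj (x j)) + (\<Sum>j\<in>J. (\<Sum>i\<in>I. c i * f i j) * cnj (\<Sum>l\<in>I. c l * f l j))"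
      unfolding r_def by (simp add: sum.distrib sum_subtractf algebra_simps)
    then show ?thesis using cc xc cx by simp
  qed
  then have "(\<Sum>j\<in>J. complex_of_real ((cmod (r j))^2)) = (\<Sum>j\<in>J. complex_of_real ((cmod (x j))^2)) - (\<Sum>i\<in>I. complex_of_real ((cmod (c i))^2))"
    by (simp only: complex_norm_square)
  then have "(\<Sum>j\<in>J. (cmod (r j))^2) = (\<Sum>j\<in>J. (cmod (x j))^2) - (\<Sum>i\<in>I. (cmod (c i))^2)"
    by (simp only: of_real_sum[symmetric] of_real_diff[symmetric] of_real_eq_iff)
  moreover have "(\<Sum>j\<in>J. (cmod (r j))^2) \<ge> 0" by (intro sum_nonneg) auto
  ultimately show ?thesis unfolding c_def by linarith
qed


lemma divmod_bij: "bij_betw (\<lambda>(a,b). a*m+b) ({..<n}\<times>{..<m}) {..<n*(m::nat)}"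
proof (rule bij_betw_byWitness[where f'="\<lambda>i. (i div m, i mod m)"])
  show "\<forall>x\<in>{..<n}\<times>{..<m}. (\<lambda>i. (i div m, i mod m)) ((\<lambda>(a,b). a*m+b) x) = x" by auto
  show "\<forall>y\<in>{..<n*m}. (\<lambda>(a,b). a*m+b) ((\<lambda>i. (i div m, i mod m)) y) = y" by auto
  show "(\<lambda>(a, b). a * m + b) ` ({..<n} \<times> {..<m}) \<subseteq> {..<n * m}"
  proof
    fix i assume "i \<in> (\<lambda>(a, b). a * m + b) ` ({..<n} \<times> {..<m})"
    then obtain a b where ab: "a < n" "b < m" "i = a * m + b" by auto
    have "a * m + b < a * m + m" using ab by simp
    also have "\<dots> = Suc a * m" by simp
    also have "\<dots> \<le> n * m" using ab by (intro mult_le_mono1) simp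
    finally show "i \<in> {..<n*m}" using ab by simp
  qed
  show "(\<lambda>i. (i div m, i mod m)) ` {..<n * m} \<subseteq> {..<n} \<times> {..<m}"
  proof
    fix x assume "x \<in> (\<lambda>i. (i div m, i mod m)) ` {..<n * m}"
    then obtain i where i: "i < n * m" "x = (i div m, i mod m)" by auto
    then have m: "m > 0" by (cases m) auto
    have "i div m < n" using i m by (simp add: div_less_iff_less_mult)
    moreover have "i mod m < m" using m by simp
    ultimately show "x \<in> {..<n} \<times> {..<m}" using i by auto
  qed
qed

lemma sum_divmod: fixes g :: "nat \<Rightarrow> 'a::comm_monoid_add"
  shows "(\<Sum>i<n*m. g i) = (\<Sum>a<n. \<Sum>b<m. g (a*m+b))"
proof -
  have "(\<Sum>i<n*m. g i) = (\<Sum>x\<in>{..<n}\<times>{..<m}. g ((\<lambda>(a,b). a*m+b) x))"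
    using sum.reindex_bij_betw[OF divmod_bij, of g] by simp
  also have "\<dots> = (\<Sum>(a,b)\<in>{..<n}\<times>{..<m}. g (a*m+b))"
    by (intro sum.cong refl) (auto split: prod.splits)
  also have "\<dots> = (\<Sum>a<n. \<Sum>b<m. g (a*m+b))"
    by (simp add: sum.cartesian_product)
  finally show ?thesis .
qed


lemma adj_dim[simp]: "dim_row (mat_adjoint A) = dim_col A" "dim_col (mat_adjoint A) = dim_row A"
  unfolding mat_adjoint_def by auto

lemma adj_index[simp]: "i < dim_col A \<Longrightarrow> j < dim_row A \<Longrightarrow> mat_adjoint A $$ (i,j) = cnj (A $$ (j,i))"
  unfolding mat_adjoint_def by (auto simp: mat_of_rows_def)

lemma adj_carrier[simp]: "A \<in> carrier_mat n m \<Longrightarrow> mat_adjoint A \<in> carrier_mat m n"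
  unfolding carrier_mat_def by simp

lemma adj_adj[simp]: "mat_adjoint (mat_adjoint (A::complex mat)) = A"
  by (rule eq_matI) auto

lemma adj_one[simp]: "mat_adjoint (1\<^sub>m n :: complex mat) = 1\<^sub>m n"
  by (rule eq_matI) auto

lemma adj_zero[simp]: "mat_adjoint (0\<^sub>m n m :: complex mat) = 0\<^sub>m m n"
  by (rule eq_matI) auto

lemma adj_mult: assumes "A \<in> carrier_mat n m" "B \<in> carrier_mat m k"
  shows "mat_adjoint (A * B :: complex mat) = mat_adjoint B * mat_adjoint A"
proof (rule eq_matI)
  fix i j assume ij: "i < dim_row (mat_adjoint B * mat_adjoint A)" "j < dim_col (mat_adjoint B * mat_adjoint A)"
  then have i: "i < k" and j: "j < n" using assms by auto
  have "mat_adjoint (A * B) $$ (i,j) = cnj (\<Sum>l<m. A $$ (j,l) * B $$ (l,i))"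
    using assms i j by (auto simp: scalar_prod_def row_def col_def atLeast0LessThan)
  also have "\<dots> = (\<Sum>l<m. cnj (B $$ (l,i)) * cnj (A $$ (j,l)))"
    by (simp add: mult.commute)
  also have "\<dots> = (mat_adjoint B * mat_adjoint A) $$ (i,j)"
    using assms i j by (auto simp: scalar_prod_def row_def col_def atLeast0LessThan)
  finally show "mat_adjoint (A * B) $$ (i, j) = (mat_adjoint B * mat_adjoint A) $$ (i, j)" .
qed (use assms in auto)

lemma adj_add: assumes "A \<in> carrier_mat n m" "B \<in> carrier_mat n m"
  shows "mat_adjoint (A + B :: complex mat) = mat_adjoint A + mat_adjoint B"
  by (rule eq_matI) (use assms in auto)

lemma adj_smult: "mat_adjoint (c \<cdot>\<^sub>m (A :: complex mat)) = cnj c \<cdot>\<^sub>m mat_adjoint A"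
  by (rule eq_matI) auto

lemma adj_four_block: assumes "A \<in> carrier_mat n1 m1" "B \<in> carrier_mat n1 m2" "C \<in> carrier_mat n2 m1" "D \<in> carrier_mat n2 m2"
  shows "mat_adjoint (four_block_mat A B C D :: complex mat) = four_block_mat (mat_adjoint A) (mat_adjoint C) (mat_adjoint B) (mat_adjoint D)"
  by (rule eq_matI) (use assms in auto)

definition unitary :: "nat \<Rightarrow> complex mat \<Rightarrow> bool" where
  "unitary n U \<longleftrightarrow> U \<in> carrier_mat n n \<and> mat_adjoint U * U = 1\<^sub>m n"

lemma unitary_right: "unitary n U \<Longrightarrow> U * mat_adjoint U = 1\<^sub>m n"
  unfolding unitary_def using mat_mult_left_right_inverse[of "mat_adjoint U" n U] by auto

lemma unitary_carrier: "unitary n U \<Longrightarrow> U \<in> carrier_mat n n" unfolding unitary_def by auto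

lemma unitary_mult: assumes "unitary n U" "unitary n V" shows "unitary n (U * V)"
proof -
  have U: "U \<in> carrier_mat n n" and V: "V \<in> carrier_mat n n" using assms unitary_def by auto
  have aU: "mat_adjoint U \<in> carrier_mat n n" and aV: "mat_adjoint V \<in> carrier_mat n n" using U V by auto
  have "mat_adjoint (U * V) * (U * V) = (mat_adjoint V * mat_adjoint U) * (U * V)"
    by (simp add: adj_mult[OF U V])
  also have "\<dots> = mat_adjoint V * (mat_adjoint U * (U * V))"
    using U V aU aV by (intro assoc_mult_mat) auto
  also have "mat_adjoint U * (U * V) = (mat_adjoint U * U) * V"
    using U V aU by (intro assoc_mult_mat[symmetric]) auto
  also have "\<dots> = V" using assms V unfolding unitary_def by simp
  also have "mat_adjoint V * V = 1\<^sub>m n" using assms unfolding unitary_def by simp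
  finally show ?thesis using U V unfolding unitary_def by auto
qed


lemma cscalar_self: fixes u :: "complex vec"
  shows "u \<bullet>c u = complex_of_real (\<Sum>i<dim_vec u. (cmod (u $ i))^2)"
proof -
  have "u \<bullet>c u = (\<Sum>i<dim_vec u. u$i * cnj (u$i))" unfolding scalar_prod_def by (simp add: atLeast0LessThan)
  also have "\<dots> = (\<Sum>i<dim_vec u. complex_of_real ((cmod (u$i))^2))" by (simp only: complex_norm_square)
  also have "\<dots> = complex_of_real (\<Sum>i<dim_vec u. (cmod (u $ i))^2)" by (simp only: of_real_sum)
  finally show ?thesis .
qed

lemma cscalar_self_real: fixes u :: "complex vec"
  shows "u \<bullet>c u = complex_of_real (Re (u \<bullet>c u))" "Re (u \<bullet>c u) \<ge> 0"
  by (subst (1 2) cscalar_self, simp, subst cscalar_self, simp add: sum_nonneg)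

lemma cscalar_smult: fixes u v :: "complex vec" assumes "dim_vec u = dim_vec v"
  shows "(a \<cdot>\<^sub>v u) \<bullet>c (b \<cdot>\<^sub>v v) = a * cnj b * (u \<bullet>c v)"
  unfolding scalar_prod_def using assms by (simp add: sum_distrib_left algebra_simps)

lemma onb_exists: fixes w :: "complex vec" assumes w: "w \<in> carrier_vec n" and w1: "w \<bullet>c w = 1"
  shows "\<exists>ws. length ws = n \<and> set ws \<subseteq> carrier_vec n \<and>
     (\<forall>i<n. \<forall>j<n. ws!i \<bullet>c ws!j = (if i = j then 1 else 0)) \<and> ws ! 0 = w"
proof -
  have w0: "w \<noteq> 0\<^sub>v n" using w1 w by auto
  interpret cof_vec_space n "TYPE(complex)" .
  define b where "b = basis_completion w"
  from basis_completion[OF w w0, folded b_def]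
  have bc: "set b \<subseteq> carrier_vec n" and dist: "distinct b" and indep: "\<not> lin_dep (set b)"
    and len: "length b = n" and hdb: "hd b = w" by auto
  have npos: "n > 0" using w w0 by (cases n) auto
  then obtain bs where bv: "b = w # bs" using len hdb by (cases b) auto
  define us where "us = gram_schmidt n b"
  from gram_schmidt_result[OF bc dist indep us_def]
  have orth: "corthogonal us" and usc: "set us \<subseteq> carrier_vec n" and lus: "length us = n"
    using len by auto
  have us0: "us ! 0 = w" using gram_schmidt_hd[OF w, of bs] bv us_def npos lus
    by (metis hd_conv_nth list.size(3) not_less_zero)
  define nrm where "nrm = (\<lambda>u::complex vec. complex_of_real (1 / sqrt (Re (u \<bullet>c u))) \<cdot>\<^sub>v u)"
  define ws where "ws = map nrm us"
  have usi: "i < n \<Longrightarrow> us ! i \<in> carrier_vec n" for i using usc lus by auto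
  have pos: "i < n \<Longrightarrow> Re (us!i \<bullet>c us!i) > 0" for i
  proof -
    assume i: "i < n"
    have ne: "us!i \<bullet>c us!i \<noteq> 0" using orth i lus unfolding corthogonal_def by auto
    have "Re (us!i \<bullet>c us!i) \<ge> 0" by (rule cscalar_self_real)
    moreover have "Re (us!i \<bullet>c us!i) \<noteq> 0" using ne cscalar_self_real(1)[of "us!i"] by force
    ultimately show ?thesis by simp
  qed
  have creal: "us!i \<bullet>c us!i = complex_of_real (Re (us!i \<bullet>c us!i))" for i
    by (rule cscalar_self_real)
  have "\<forall>i<n. \<forall>j<n. ws!i \<bullet>c ws!j = (if i = j then 1 else 0)"
  proof (intro allI impI)
    fix i j assume i: "i < n" and j: "j < n"
    have "ws!i \<bullet>c ws!j = complex_of_real (1 / sqrt (Re (us!i \<bullet>c us!i))) * cnj (complex_of_real (1 / sqrt (Re (us!j \<bullet>c us!j)))) * (us!i \<bullet>c us!j)"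
      unfolding ws_def nrm_def using i j lus usi[OF i] usi[OF j]
      by (simp only: nth_map) (rule cscalar_smult, simp)
    also have "\<dots> = complex_of_real (1 / sqrt (Re (us!i \<bullet>c us!i))) * complex_of_real (1 / sqrt (Re (us!j \<bullet>c us!j))) * (us!i \<bullet>c us!j)"
      by (simp only: complex_cnj_complex_of_real)
    also have "\<dots> = (if i = j then 1 else 0)"
    proof (cases "i = j")
      case True
      define r where "r = Re (us!i \<bullet>c us!i)"
      have r: "r > 0" using pos i r_def by auto
      have x: "us!i \<bullet>c us!i = complex_of_real r" using creal r_def by auto
      have "complex_of_real (1 / sqrt r) * complex_of_real (1 / sqrt r) * complex_of_real r
        = complex_of_real (1 / sqrt r * (1 / sqrt r) * r)" by (simp only: of_real_mult)
      also have "1 / sqrt r * (1 / sqrt r) * r = 1"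
      proof -
        have "sqrt r * sqrt r = r" using r by simp
        then show ?thesis using r by (simp add: field_simps)
      qed
      finally have F: "complex_of_real (1 / sqrt r) * complex_of_real (1 / sqrt r) * complex_of_real r = 1" by simp
      have F2: "complex_of_real (1 / sqrt (Re (us!i \<bullet>c us!i))) * complex_of_real (1 / sqrt (Re (us!i \<bullet>c us!i))) * (us!i \<bullet>c us!i) = 1"
        using F unfolding x[symmetric] unfolding r_def .
      have G: "(if i = j then 1 else 0) = (1::complex)" using True by simp
      show ?thesis unfolding G using F2 unfolding True .
    next
      case False
      then have "us!i \<bullet>c us!j = 0" using orth i j lus unfolding corthogonal_def by auto
      then show ?thesis using False by simp
    qed
    finally show "ws!i \<bullet>c ws!j = (if i = j then 1 else 0)" .
  qed
  moreover have "ws ! 0 = w" unfolding ws_def nrm_def using npos lus us0 w1 by simp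
  moreover have "set ws \<subseteq> carrier_vec n" unfolding ws_def nrm_def using usc by auto
  moreover have "length ws = n" using lus ws_def by simp
  ultimately show ?thesis by blast
qed


lemma sq_assoc: "A \<in> carrier_mat n n \<Longrightarrow> B \<in> carrier_mat n n \<Longrightarrow> C \<in> carrier_mat n n \<Longrightarrow> A * B * C = A * (B * C)"
  by (rule assoc_mult_mat)
lemma sq_mult: "A \<in> carrier_mat n n \<Longrightarrow> B \<in> carrier_mat n n \<Longrightarrow> A * B \<in> carrier_mat n n"
  by (rule mult_carrier_mat)

lemma eigvec_unit: fixes A :: "complex mat" assumes A: "A \<in> carrier_mat n n" and n: "n > 0"
  shows "\<exists>w e. w \<in> carrier_vec n \<and> w \<bullet>c w = 1 \<and> A *\<^sub>v w = e \<cdot>\<^sub>v w"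
proof -
  obtain as where cp: "char_poly A = (\<Prod>a\<leftarrow>as. [:- a, 1:])" and l: "length as = n"
    using char_poly_factorized[OF A] by blast
  then obtain e es where as: "as = e # es" using n by (cases as) auto
  have "poly (char_poly A) e = 0" unfolding cp as by simp
  then have "eigenvalue A e" using eigenvalue_root_char_poly[OF A] by simp
  then obtain v where ev: "eigenvector A v e" unfolding eigenvalue_def by blast
  then have v: "v \<in> carrier_vec n" "v \<noteq> 0\<^sub>v n" "A *\<^sub>v v = e \<cdot>\<^sub>v v" using A unfolding eigenvector_def by auto
  define r where "r = Re (v \<bullet>c v)"
  have vv: "v \<bullet>c v = complex_of_real r" using cscalar_self_real r_def by auto
  have "v \<bullet>c v \<noteq> 0" using v conjugate_square_eq_0_vec[OF v(1)] by auto
  then have "r \<noteq> 0" using vv by auto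
  then have r: "r > 0" using cscalar_self_real(2)[of v] r_def by linarith
  define w where "w = complex_of_real (1/sqrt r) \<cdot>\<^sub>v v"
  have "w \<bullet>c w = complex_of_real (1/sqrt r) * cnj (complex_of_real (1/sqrt r)) * (v \<bullet>c v)"
    unfolding w_def by (rule cscalar_smult) simp
  also have "\<dots> = complex_of_real (1/sqrt r * (1/sqrt r) * r)" unfolding vv
    by (simp only: complex_cnj_complex_of_real of_real_mult)
  also have "1/sqrt r * (1/sqrt r) * r = 1" using r by (simp add: field_simps)
  finally have w1: "w \<bullet>c w = 1" by simp
  have "A *\<^sub>v w = e \<cdot>\<^sub>v w" unfolding w_def using A v
    by (simp add: mult_mat_vec smult_smult_assoc mult.commute)
  moreover have "w \<in> carrier_vec n" using v w_def by simp
  ultimately show ?thesis using w1 by blast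
qed

lemma unitary_schur: fixes A :: "complex mat" shows "A \<in> carrier_mat n n \<Longrightarrow> \<exists>U B. unitary n U \<and> B \<in> carrier_mat n n \<and> upper_triangular B \<and> A = U * B * mat_adjoint U"
proof (induction n arbitrary: A)
  case 0
  then show ?case
    by (intro exI[of _ "1\<^sub>m 0"] exI[of _ A]) (auto simp: unitary_def upper_triangular_def)
next
  case (Suc m)
  let ?n = "Suc m"
  have A: "A \<in> carrier_mat ?n ?n" by fact
  obtain w e where w: "w \<in> carrier_vec ?n" "w \<bullet>c w = 1" "A *\<^sub>v w = e \<cdot>\<^sub>v w" using eigvec_unit[OF A] by auto
  obtain ws where ws: "length ws = ?n" "set ws \<subseteq> carrier_vec ?n" "\<forall>i<?n. \<forall>j<?n. ws!i \<bullet>c ws!j = (if i=j then 1 else 0)" "ws!0 = w"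
    using onb_exists[OF w(1,2)] by blast
  define W where "W = mat_of_cols ?n ws"
  have W: "W \<in> carrier_mat ?n ?n" using ws mat_of_cols_carrier(1)[of ?n ws] by (simp add: W_def)
  have wsi: "i < ?n \<Longrightarrow> ws ! i \<in> carrier_vec ?n" for i using ws by auto
  have WW: "mat_adjoint W * W = 1\<^sub>m ?n"
  proof (rule eq_matI)
    fix i j assume "i < dim_row (1\<^sub>m ?n)" "j < dim_col (1\<^sub>m ?n)"
    then have i: "i < ?n" and j: "j < ?n" by auto
    have "(mat_adjoint W * W) $$ (i,j) = (\<Sum>k<?n. cnj (W $$ (k,i)) * W $$ (k,j))"
      using W i j by (simp add: scalar_prod_def atLeast0LessThan row_def col_def)
    also have "\<dots> = (\<Sum>k<?n. ws!j $ k * cnj (ws!i $ k))"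
      using ws i j by (intro sum.cong) (auto simp: W_def mat_of_cols_index mult.commute)
    also have "\<dots> = ws!j \<bullet>c ws!i"
      using wsi[OF i] wsi[OF j] by (simp add: scalar_prod_def atLeast0LessThan)
    also have "\<dots> = (1\<^sub>m ?n) $$ (i,j)" using ws(3) i j by auto
    finally show "(mat_adjoint W * W) $$ (i,j) = (1\<^sub>m ?n) $$ (i,j)" .
  qed (use W in auto)
  have Wu: "unitary ?n W" using W WW unitary_def by auto
  have aW: "mat_adjoint W \<in> carrier_mat ?n ?n" using W by simp
  have W0: "col W 0 = w" unfolding W_def using ws wsi[of 0] by (subst col_mat_of_cols) auto
  define A' where "A' = mat_adjoint W * A * W"
  have A': "A' \<in> carrier_mat ?n ?n" unfolding A'_def using A W aW by (metis mult_carrier_mat)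
  have colA': "col A' 0 = e \<cdot>\<^sub>v unit_vec ?n 0"
  proof -
    have "col A' 0 = (mat_adjoint W * A) *\<^sub>v col W 0" unfolding A'_def
      using A W aW by (intro col_mult2) auto
    also have "\<dots> = mat_adjoint W *\<^sub>v (A *\<^sub>v w)" using W0 A aW w by (simp add: assoc_mult_mat_vec)
    also have "\<dots> = e \<cdot>\<^sub>v (mat_adjoint W *\<^sub>v col W 0)" using w W0 aW by (simp add: mult_mat_vec)
    also have "mat_adjoint W *\<^sub>v col W 0 = col (mat_adjoint W * W) 0" using aW W by (intro col_mult2[symmetric]) auto
    also have "\<dots> = unit_vec ?n 0" using WW by simp
    finally show ?thesis .
  qed
  have A'0: "A' $$ (Suc i, 0) = 0" if "i < m" for i
  proof -
    have "A' $$ (Suc i, 0) = col A' 0 $ Suc i" using A' that by simp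
    then show ?thesis using colA' that by simp
  qed
  obtain A1 A2 A0 A3 where sp: "split_block A' 1 1 = (A1,A2,A0,A3)" by (cases "split_block A' 1 1") auto
  have dims: "dim_row A' = 1 + m" "dim_col A' = 1 + m" using A' by auto
  note sb = split_block[OF sp dims]
  have A0z: "A0 = 0\<^sub>m m 1" using sp A'0 dims unfolding split_block_def Let_def
    by (auto intro!: eq_matI)
  obtain U3 B3 where IH: "unitary m U3" "B3 \<in> carrier_mat m m" "upper_triangular B3" "A3 = U3 * B3 * mat_adjoint U3"
    using Suc.IH[OF sb(4)] by blast
  have U3: "U3 \<in> carrier_mat m m" using IH unitary_def by auto
  have aU3: "mat_adjoint U3 \<in> carrier_mat m m" using U3 by simp
  have U3U3: "U3 * mat_adjoint U3 = 1\<^sub>m m" using unitary_right[OF IH(1)] .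
  have aU3U3: "mat_adjoint U3 * U3 = 1\<^sub>m m" using IH(1) unitary_def by auto
  define P where "P = four_block_mat (1\<^sub>m 1) (0\<^sub>m 1 m) (0\<^sub>m m 1) U3"
  have P: "P \<in> carrier_mat ?n ?n" unfolding P_def using U3 four_block_carrier_mat[of "1\<^sub>m 1" 1 1 U3 m m] by simp
  have Padj: "mat_adjoint P = four_block_mat (1\<^sub>m 1) (0\<^sub>m 1 m) (0\<^sub>m m 1) (mat_adjoint U3)"
    unfolding P_def by (subst adj_four_block[of _ 1 1 _ m _ m]) (use U3 in auto)
  have aP: "mat_adjoint P \<in> carrier_mat ?n ?n" using P by simp
  have "mat_adjoint P * P = four_block_mat (1\<^sub>m 1) (0\<^sub>m 1 m) (0\<^sub>m m 1) (1\<^sub>m m)"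
    unfolding Padj unfolding P_def
    by (subst mult_four_block_mat[of _ 1 1 _ m _ m _ _ 1 _ m]) (use U3 aU3 aU3U3 in auto)
  then have Pu: "unitary ?n P" using P unfolding unitary_def by simp
  define B where "B = four_block_mat A1 (A2 * U3) A0 B3"
  have B: "B \<in> carrier_mat ?n ?n" unfolding B_def using sb IH four_block_carrier_mat[of A1 1 1 B3 m m] by simp
  have Bu: "upper_triangular B" unfolding upper_triangular_def
  proof (intro allI impI)
    fix i j assume i: "i < dim_row B" and ji: "j < i"
    have i': "i < Suc m" using i B by auto
    show "B $$ (i,j) = 0"
    proof (cases "j = 0")
      case True
      then show ?thesis unfolding B_def using sb IH i' ji A0z by auto
    next
      case False
      then have "B3 $$ (i - 1, j - 1) = 0" using IH(2,3) i' ji by (intro upper_triangularD) auto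
      then show ?thesis unfolding B_def using sb IH i' ji False by auto
    qed
  qed
  have PB: "P * B = four_block_mat A1 (A2 * U3) A0 (U3 * B3)"
    unfolding P_def B_def
    by (subst mult_four_block_mat[of _ 1 1 _ m _ m _ _ 1 _ m]) (use U3 sb IH A0z in auto)
  have A2U: "A2 * U3 * mat_adjoint U3 = A2"
    using sb U3 aU3 U3U3 by (simp add: assoc_mult_mat[of A2 1 m U3 m "mat_adjoint U3" m])
  have PBP: "P * B * mat_adjoint P = A'"
    unfolding PB Padj
    apply (subst mult_four_block_mat[of _ 1 1 _ m _ m _ _ 1 _ m])
    using U3 aU3 sb IH A0z A2U by auto
  have AW: "A = W * A' * mat_adjoint W"
  proof -
    have WaW: "W * mat_adjoint W = 1\<^sub>m ?n" using unitary_right[OF Wu] .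
    have "W * A' * mat_adjoint W = (W * mat_adjoint W) * A * (W * mat_adjoint W)"
      unfolding A'_def using W aW A by (simp add: sq_assoc[of _ ?n] sq_mult[of _ ?n])
    then show ?thesis using WaW A by simp
  qed
  have "W * P * B * mat_adjoint (W * P) = W * (P * B * mat_adjoint P) * mat_adjoint W"
    using W P B aW aP by (simp add: adj_mult[OF W P] sq_assoc[of _ ?n] sq_mult[of _ ?n])
  then have "A = (W * P) * B * mat_adjoint (W * P)" using AW PBP by simp
  then show ?case using unitary_mult[OF Wu Pu] B Bu by blast
qed


definition dmat :: "nat \<Rightarrow> (nat \<Rightarrow> real) \<Rightarrow> complex mat" where
  "dmat n d = mat n n (\<lambda>(i,j). if i = j then complex_of_real (d i) else 0)"

lemma dmat_carrier[simp]: "dmat n d \<in> carrier_mat n n" "dim_row (dmat n d) = n" "dim_col (dmat n d) = n"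
  unfolding dmat_def by auto

lemma dmat_index[simp]: "i < n \<Longrightarrow> j < n \<Longrightarrow> dmat n d $$ (i,j) = (if i = j then complex_of_real (d i) else 0)"
  unfolding dmat_def by auto

lemma dmat_cong: "(\<And>i. i < n \<Longrightarrow> d i = e i) \<Longrightarrow> dmat n d = dmat n e"
  by (rule eq_matI) auto

lemma dmat_mult: "dmat n d * dmat n e = dmat n (\<lambda>i. d i * e i)"
proof (rule eq_matI)
  fix i j assume "i < dim_row (dmat n (\<lambda>i. d i * e i))" "j < dim_col (dmat n (\<lambda>i. d i * e i))"
  then have i: "i < n" and j: "j < n" by auto
  have "(dmat n d * dmat n e) $$ (i,j) = (\<Sum>k\<in>{0..<n}. dmat n d $$ (i,k) * dmat n e $$ (k,j))"
    using i j by (simp add: scalar_prod_def)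
  also have "\<dots> = (\<Sum>k\<in>{0..<n}. if k = i then (if i = j then complex_of_real (d i * e i) else 0) else 0)"
    using i j by (intro sum.cong refl) auto
  also have "\<dots> = dmat n (\<lambda>i. d i * e i) $$ (i,j)" using i j by simp
  finally show "(dmat n d * dmat n e) $$ (i,j) = dmat n (\<lambda>i. d i * e i) $$ (i,j)" .
qed auto

lemma adj_dmat[simp]: "mat_adjoint (dmat n d) = dmat n d"
  by (rule eq_matI) auto

lemma dmat_one: "dmat n (\<lambda>_. 1) = 1\<^sub>m n"
  by (rule eq_matI) auto

lemma dmat_zero: "dmat n (\<lambda>_. 0) = 0\<^sub>m n n"
  by (rule eq_matI) auto

lemma unitary_adj_carrier: "unitary n U \<Longrightarrow> mat_adjoint U \<in> carrier_mat n n"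
  unfolding unitary_def by auto

lemma unitary_left: "unitary n U \<Longrightarrow> mat_adjoint U * U = 1\<^sub>m n"
  unfolding unitary_def by auto

lemma unitary_conj_carrier: "unitary n U \<Longrightarrow> E \<in> carrier_mat n n \<Longrightarrow> U * E * mat_adjoint U \<in> carrier_mat n n"
  using unitary_carrier unitary_adj_carrier by (metis mult_carrier_mat)

lemma unitary_unconj: assumes "unitary n U" "E \<in> carrier_mat n n"
  shows "mat_adjoint U * (U * E * mat_adjoint U) * U = E"
proof -
  have U: "U \<in> carrier_mat n n" and aU: "mat_adjoint U \<in> carrier_mat n n"
    using assms unitary_carrier unitary_adj_carrier by auto
  have "mat_adjoint U * (U * E * mat_adjoint U) * U = (mat_adjoint U * U) * E * (mat_adjoint U * U)"
    using U aU assms(2) by (simp add: sq_assoc[of _ n] sq_mult[of _ n])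
  then show ?thesis using unitary_left[OF assms(1)] assms(2) by simp
qed

lemma unitary_conj_mult: assumes "unitary n U" "D \<in> carrier_mat n n" "E \<in> carrier_mat n n"
  shows "(U * D * mat_adjoint U) * (U * E * mat_adjoint U) = U * (D * E) * mat_adjoint U"
proof -
  have U: "U \<in> carrier_mat n n" and aU: "mat_adjoint U \<in> carrier_mat n n"
    using assms unitary_carrier unitary_adj_carrier by auto
  have "(U * D * mat_adjoint U) * (U * E * mat_adjoint U) = U * D * (mat_adjoint U * U) * E * mat_adjoint U"
    using U aU assms by (simp add: sq_assoc[of _ n] sq_mult[of _ n])
  also have "\<dots> = U * (D * E) * mat_adjoint U"
    using U aU assms unitary_left[OF assms(1)] by (simp add: sq_assoc[of _ n] sq_mult[of _ n])
  finally show ?thesis .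
qed

lemma unitary_conj_dmat_mult: "unitary n U \<Longrightarrow>
  (U * dmat n d * mat_adjoint U) * (U * dmat n e * mat_adjoint U) = U * dmat n (\<lambda>i. d i * e i) * mat_adjoint U"
  using unitary_conj_mult[of n U "dmat n d" "dmat n e"] by (simp add: dmat_mult)

lemma unitary_conj_pow: assumes "unitary n U"
  shows "(U * dmat n d * mat_adjoint U) ^\<^sub>m k = U * dmat n (\<lambda>i. d i ^ k) * mat_adjoint U"
proof (induction k)
  case 0
  have U: "U \<in> carrier_mat n n" and aU: "mat_adjoint U \<in> carrier_mat n n"
    using assms unitary_carrier unitary_adj_carrier by auto
  have "U * dmat n (\<lambda>i. d i ^ 0) * mat_adjoint U = U * mat_adjoint U"
    using U by (simp add: dmat_one)
  also have "\<dots> = 1\<^sub>m n" by (rule unitary_right[OF assms])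
  finally show ?case using U by simp
next
  case (Suc k)
  have "(U * dmat n d * mat_adjoint U) ^\<^sub>m Suc k = (U * dmat n d * mat_adjoint U) ^\<^sub>m k * (U * dmat n d * mat_adjoint U)"
    by simp
  also have "\<dots> = U * dmat n (\<lambda>i. d i ^ k * d i) * mat_adjoint U"
    unfolding Suc by (rule unitary_conj_dmat_mult[OF assms])
  also have "(\<lambda>i. d i ^ k * d i) = (\<lambda>i. d i ^ Suc k)" by (simp add: mult.commute)
  finally show ?case .
qed

lemma mtrace_cyclic: assumes "A \<in> carrier_mat n m" "B \<in> carrier_mat m n"
  shows "mtrace (A * B) = mtrace (B * A)"
proof -
  have "mtrace (A * B) = (\<Sum>i<n. \<Sum>k<m. A $$ (i,k) * B $$ (k,i))"
    unfolding mtrace_def using assms by (simp add: scalar_prod_def atLeast0LessThan)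
  also have "\<dots> = (\<Sum>k<m. \<Sum>i<n. B $$ (k,i) * A $$ (i,k))"
    by (subst sum.swap) (simp add: mult.commute)
  also have "\<dots> = mtrace (B * A)"
    unfolding mtrace_def using assms by (simp add: scalar_prod_def atLeast0LessThan)
  finally show ?thesis .
qed

lemma mtrace_unitary_conj: assumes "unitary n U" "X \<in> carrier_mat n n"
  shows "mtrace (U * X * mat_adjoint U) = mtrace X"
proof -
  have U: "U \<in> carrier_mat n n" and aU: "mat_adjoint U \<in> carrier_mat n n"
    using assms unitary_carrier unitary_adj_carrier by auto
  have "mtrace (U * X * mat_adjoint U) = mtrace (mat_adjoint U * (U * X))"
    using U aU assms(2) by (intro mtrace_cyclic[of _ n n]) auto
  also have "mat_adjoint U * (U * X) = (mat_adjoint U * U) * X"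
    using U aU assms(2) by (simp add: sq_assoc[of _ n])
  finally show ?thesis using unitary_left[OF assms(1)] assms(2) by simp
qed

lemma mtrace_dmat: "mtrace (dmat n d) = (\<Sum>i<n. complex_of_real (d i))"
  unfolding mtrace_def by simp

lemma mtrace_conj_dmat: "unitary n U \<Longrightarrow> mtrace (U * dmat n d * mat_adjoint U) = (\<Sum>i<n. complex_of_real (d i))"
  by (simp add: mtrace_unitary_conj mtrace_dmat)

lemma cnj_self_real: "cnj z = z \<Longrightarrow> z = complex_of_real (Re z)"
  by (simp add: complex_eq_iff)

lemma herm_spectral:
  assumes A: "A \<in> carrier_mat n n" and h: "hermitian A"
  shows "\<exists>U d. unitary n U \<and> A = U * dmat n d * mat_adjoint U"
proof -
  obtain U B where UB: "unitary n U" "B \<in> carrier_mat n n" "upper_triangular B" "A = U * B * mat_adjoint U"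
    using unitary_schur[OF A] by blast
  have U: "U \<in> carrier_mat n n" and aU: "mat_adjoint U \<in> carrier_mat n n"
    using UB unitary_carrier unitary_adj_carrier by auto
  have BA: "B = mat_adjoint U * A * U" using unitary_unconj[OF UB(1) UB(2)] UB(4) by simp
  have Bh: "mat_adjoint B = B"
  proof -
    have "mat_adjoint B = mat_adjoint U * mat_adjoint (mat_adjoint U * A)"
      unfolding BA by (rule adj_mult[of _ n n]) (use aU A U in auto)
    also have "mat_adjoint (mat_adjoint U * A) = mat_adjoint A * U"
      using adj_mult[of "mat_adjoint U" n n A n] aU A by simp
    also have "mat_adjoint A = A" using h unfolding hermitian_def .
    finally show ?thesis using BA U aU A by (simp add: sq_assoc[of _ n])
  qed
  have "B = dmat n (\<lambda>i. Re (B $$ (i,i)))"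
  proof (rule eq_matI)
    fix i j assume "i < dim_row (dmat n (\<lambda>i. Re (B $$ (i,i))))" "j < dim_col (dmat n (\<lambda>i. Re (B $$ (i,i))))"
    then have i: "i < n" and j: "j < n" by auto
    have adjB: "B $$ (i,j) = cnj (B $$ (j,i))" using adj_index[of i B j] Bh UB(2) i j by auto
    show "B $$ (i,j) = dmat n (\<lambda>i. Re (B $$ (i,i))) $$ (i,j)"
    proof (cases "i = j")
      case True
      then show ?thesis using adjB i cnj_self_real[of "B $$ (i,i)"] by auto
    next
      case False
      show ?thesis
      proof (cases "j < i")
        case True
        then show ?thesis using UB(2,3) i j False by auto
      next
        case False2: False
        then have "i < j" using False by auto
        then have "B $$ (j,i) = 0" using UB(2,3) j by auto
        then show ?thesis using adjB i j False by auto
      qed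
    qed
  qed (use UB in auto)
  then show ?thesis using UB by metis
qed

lemma quad_form_conj: fixes A U :: "complex mat" assumes A: "A \<in> carrier_mat n n" and U: "U \<in> carrier_mat n n" and i: "i < n"
  shows "(mat_adjoint U * A * U) $$ (i,i) = (A *\<^sub>v col U i) \<bullet>c col U i"
proof -
  have "(mat_adjoint U * A * U) $$ (i,i) = (\<Sum>b<n. (\<Sum>a<n. cnj (U $$ (a,i)) * A $$ (a,b)) * U $$ (b,i))"
    using A U i by (simp add: scalar_prod_def atLeast0LessThan)
  also have "\<dots> = (\<Sum>b<n. \<Sum>a<n. cnj (U $$ (a,i)) * A $$ (a,b) * U $$ (b,i))"
    by (simp add: sum_distrib_right)
  also have "\<dots> = (\<Sum>a<n. \<Sum>b<n. cnj (U $$ (a,i)) * A $$ (a,b) * U $$ (b,i))"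
    by (rule sum.swap)
  also have "\<dots> = (\<Sum>a<n. (\<Sum>b<n. A $$ (a,b) * U $$ (b,i)) * cnj (U $$ (a,i)))"
    by (simp add: sum_distrib_right sum_distrib_left mult_ac)
  also have "\<dots> = (A *\<^sub>v col U i) \<bullet>c col U i"
    using A U i by (simp add: scalar_prod_def atLeast0LessThan)
  finally show ?thesis .
qed

lemma psd_spectral:
  assumes "psd n A" shows "\<exists>U d. unitary n U \<and> A = U * dmat n d * mat_adjoint U \<and> (\<forall>i<n. d i \<ge> 0)"
proof -
  have A: "A \<in> carrier_mat n n" and h: "hermitian A" using assms unfolding psd_def by auto
  obtain U d where Ud: "unitary n U" "A = U * dmat n d * mat_adjoint U" using herm_spectral[OF A h] by blast
  have U: "U \<in> carrier_mat n n" using Ud unitary_carrier by auto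
  have D: "mat_adjoint U * A * U = dmat n d" using unitary_unconj[OF Ud(1), of "dmat n d"] Ud(2) by simp
  have "d i \<ge> 0" if i: "i < n" for i
  proof -
    have "complex_of_real (d i) = (mat_adjoint U * A * U) $$ (i,i)" using D i by simp
    also have "\<dots> = (A *\<^sub>v col U i) \<bullet>c col U i" by (rule quad_form_conj[OF A U i])
    finally have "d i = Re ((A *\<^sub>v col U i) \<bullet>c col U i)" by (metis Re_complex_of_real)
    moreover have "col U i \<in> carrier_vec n" using U by auto
    ultimately show ?thesis using assms unfolding psd_def by auto
  qed
  then show ?thesis using Ud by blast
qed


lemma adj_cscalar: fixes A :: "complex mat"
  assumes A: "A \<in> carrier_mat n m" and x: "x \<in> carrier_vec m" and y: "y \<in> carrier_vec n"
  shows "(A *\<^sub>v x) \<bullet>c y = x \<bullet>c (mat_adjoint A *\<^sub>v y)"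
proof -
  have L: "(A *\<^sub>v x) \<bullet>c y = (\<Sum>a<n. \<Sum>b<m. A $$ (a,b) * x $ b * cnj (y $ a))"
    using assms by (simp add: scalar_prod_def atLeast0LessThan sum_distrib_right sum_distrib_left mult_ac)
  have R: "x \<bullet>c (mat_adjoint A *\<^sub>v y) = (\<Sum>b<m. \<Sum>a<n. A $$ (a,b) * x $ b * cnj (y $ a))"
    using assms by (simp add: scalar_prod_def atLeast0LessThan sum_distrib_left mult_ac)
  show ?thesis unfolding L R by (rule sum.swap)
qed

lemma dmat_mult_vec: "w \<in> carrier_vec n \<Longrightarrow> dmat n d *\<^sub>v w = vec n (\<lambda>i. complex_of_real (d i) * w $ i)"
proof (rule eq_vecI)
  fix i assume w: "w \<in> carrier_vec n" and "i < dim_vec (vec n (\<lambda>i. complex_of_real (d i) * w $ i))"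
  then have i: "i < n" by auto
  have "(dmat n d *\<^sub>v w) $ i = (\<Sum>k\<in>{0..<n}. dmat n d $$ (i,k) * w $ k)"
    using i w by (simp add: scalar_prod_def)
  also have "\<dots> = (\<Sum>k\<in>{0..<n}. if k = i then complex_of_real (d i) * w $ i else 0)"
    using i by (intro sum.cong refl) auto
  also have "\<dots> = complex_of_real (d i) * w $ i" using i by simp
  finally show "(dmat n d *\<^sub>v w) $ i = vec n (\<lambda>i. complex_of_real (d i) * w $ i) $ i" using i by simp
qed auto

lemma dmat_quad: "w \<in> carrier_vec n \<Longrightarrow> (dmat n d *\<^sub>v w) \<bullet>c w = complex_of_real (\<Sum>i<n. d i * (cmod (w $ i))^2)"
proof -
  assume w: "w \<in> carrier_vec n"
  have "(dmat n d *\<^sub>v w) \<bullet>c w = (\<Sum>i<n. complex_of_real (d i) * (w $ i * cnj (w $ i)))"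
    using w by (simp add: dmat_mult_vec scalar_prod_def atLeast0LessThan mult_ac)
  also have "\<dots> = (\<Sum>i<n. complex_of_real (d i * (cmod (w $ i))^2))"
    by (simp only: complex_norm_square[symmetric] of_real_mult)
  also have "\<dots> = complex_of_real (\<Sum>i<n. d i * (cmod (w $ i))^2)" by (simp only: of_real_sum)
  finally show ?thesis .
qed

lemma adj_conj: fixes U D :: "complex mat" assumes "U \<in> carrier_mat n n" "D \<in> carrier_mat n n"
  shows "mat_adjoint (U * D * mat_adjoint U) = U * mat_adjoint D * mat_adjoint U"
proof -
  have aU: "mat_adjoint U \<in> carrier_mat n n" using assms by simp
  have "mat_adjoint (U * D * mat_adjoint U) = mat_adjoint (mat_adjoint U) * mat_adjoint (U * D)"
    using assms aU by (intro adj_mult[of _ n n]) (auto intro: mult_carrier_mat)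
  also have "mat_adjoint (U * D) = mat_adjoint D * mat_adjoint U" using assms by (intro adj_mult[of _ n n])
  finally show ?thesis using assms aU by (simp add: sq_assoc[of _ n] sq_mult[of _ n])
qed

lemma psd_conj_dmat: assumes U: "unitary n U" and d: "\<And>i. i < n \<Longrightarrow> d i \<ge> 0"
  shows "psd n (U * dmat n d * mat_adjoint U)"
proof -
  have Uc: "U \<in> carrier_mat n n" and aU: "mat_adjoint U \<in> carrier_mat n n"
    using U unitary_carrier unitary_adj_carrier by auto
  have c: "U * dmat n d * mat_adjoint U \<in> carrier_mat n n" using unitary_conj_carrier[OF U] by simp
  have h: "hermitian (U * dmat n d * mat_adjoint U)" unfolding hermitian_def
    using adj_conj[OF Uc, of "dmat n d"] by simp
  have "0 \<le> Re ((U * dmat n d * mat_adjoint U *\<^sub>v v) \<bullet>c v)" if v: "v \<in> carrier_vec n" for v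
  proof -
    define w where "w = mat_adjoint U *\<^sub>v v"
    have w: "w \<in> carrier_vec n" using aU v w_def by simp
    have "(U * dmat n d * mat_adjoint U *\<^sub>v v) = (U * dmat n d) *\<^sub>v w"
      unfolding w_def by (rule assoc_mult_mat_vec) (use Uc aU v in auto)
    also have "\<dots> = U *\<^sub>v (dmat n d *\<^sub>v w)" by (rule assoc_mult_mat_vec) (use Uc w in auto)
    finally have "(U * dmat n d * mat_adjoint U *\<^sub>v v) = U *\<^sub>v (dmat n d *\<^sub>v w)" .
    have z: "dmat n d *\<^sub>v w \<in> carrier_vec n" by (rule mult_mat_vec_carrier[OF dmat_carrier(1) w])
    have e2: "(U *\<^sub>v (dmat n d *\<^sub>v w)) \<bullet>c v = (dmat n d *\<^sub>v w) \<bullet>c w"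
      using adj_cscalar[OF Uc z v] unfolding w_def[symmetric] .
    have "(U * dmat n d * mat_adjoint U *\<^sub>v v) \<bullet>c v = (dmat n d *\<^sub>v w) \<bullet>c w"
      unfolding \<open>(U * dmat n d * mat_adjoint U *\<^sub>v v) = U *\<^sub>v (dmat n d *\<^sub>v w)\<close> by (rule e2)
    also have "\<dots> = complex_of_real (\<Sum>i<n. d i * (cmod (w $ i))^2)" by (rule dmat_quad[OF w])
    finally have q: "(U * dmat n d * mat_adjoint U *\<^sub>v v) \<bullet>c v = complex_of_real (\<Sum>i<n. d i * (cmod (w $ i))^2)" .
    have "(\<Sum>i<n. d i * (cmod (w $ i))^2) \<ge> 0" using d by (intro sum_nonneg) auto
    then show ?thesis unfolding q by (simp only: Re_complex_of_real)
  qed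
  then show ?thesis using c h unfolding psd_def by auto
qed

lemma psd_MMadj: fixes M :: "complex mat" assumes M: "M \<in> carrier_mat n m"
  shows "psd n (M * mat_adjoint M)"
proof -
  have aM: "mat_adjoint M \<in> carrier_mat m n" using M by simp
  have c: "M * mat_adjoint M \<in> carrier_mat n n" using M aM by (metis mult_carrier_mat)
  have h: "hermitian (M * mat_adjoint M)" unfolding hermitian_def
    using adj_mult[OF M aM] by simp
  have "0 \<le> Re ((M * mat_adjoint M *\<^sub>v v) \<bullet>c v)" if v: "v \<in> carrier_vec n" for v
  proof -
    define w where "w = mat_adjoint M *\<^sub>v v"
    have w: "w \<in> carrier_vec m" using aM v w_def by simp
    have "(M * mat_adjoint M *\<^sub>v v) = M *\<^sub>v w" unfolding w_def by (rule assoc_mult_mat_vec) (use M aM v in auto)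
    then have "(M * mat_adjoint M *\<^sub>v v) \<bullet>c v = w \<bullet>c w"
      using adj_cscalar[OF M w v] w_def by simp
    then show ?thesis using cscalar_self_real(2)[of w] by simp
  qed
  then show ?thesis using c h unfolding psd_def by auto
qed

lemma psd_trace: assumes "psd n M"
  shows "mtrace M = complex_of_real (Re (mtrace M))" "Re (mtrace M) \<ge> 0"
proof -
  obtain U d where Ud: "unitary n U" "M = U * dmat n d * mat_adjoint U" "\<forall>i<n. d i \<ge> 0"
    using psd_spectral[OF assms] by blast
  have t: "mtrace M = complex_of_real (\<Sum>i<n. d i)" using mtrace_conj_dmat[OF Ud(1)] Ud(2) by simp
  show "mtrace M = complex_of_real (Re (mtrace M))" unfolding t by simp
  show "Re (mtrace M) \<ge> 0" unfolding t using Ud(3) by (simp, intro sum_nonneg) auto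
qed

lemma psd_trace_zero: assumes "psd n M" "mtrace M = 0" shows "M = 0\<^sub>m n n"
proof -
  obtain U d where Ud: "unitary n U" "M = U * dmat n d * mat_adjoint U" "\<forall>i<n. d i \<ge> 0"
    using psd_spectral[OF assms(1)] by blast
  have "complex_of_real (\<Sum>i<n. d i) = 0" using mtrace_conj_dmat[OF Ud(1)] Ud(2) assms(2) by simp
  then have "(\<Sum>i<n. d i) = 0" by (simp only: of_real_eq_0_iff)
  then have "\<forall>i\<in>{..<n}. d i = 0" using Ud(3) by (subst sum_nonneg_eq_0_iff[symmetric]) auto
  then have "dmat n d = dmat n (\<lambda>_. 0)" by (intro dmat_cong) auto
  then have "dmat n d = 0\<^sub>m n n" by (simp add: dmat_zero)
  then show ?thesis using Ud(2) unitary_carrier[OF Ud(1)] unitary_adj_carrier[OF Ud(1)] by simp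
qed

lemma herm_cube_zero: fixes X :: "complex mat"
  assumes X: "X \<in> carrier_mat n n" and h: "hermitian X" and z: "X * X * X = 0\<^sub>m n n"
  shows "X = 0\<^sub>m n n"
proof -
  obtain U d where Ud: "unitary n U" "X = U * dmat n d * mat_adjoint U" using herm_spectral[OF X h] by blast
  have Uc: "U \<in> carrier_mat n n" and aU: "mat_adjoint U \<in> carrier_mat n n"
    using Ud unitary_carrier unitary_adj_carrier by auto
  have "X * X * X = U * dmat n (\<lambda>i. d i * d i * d i) * mat_adjoint U"
    unfolding Ud(2) by (simp add: unitary_conj_dmat_mult[OF Ud(1)])
  then have "dmat n (\<lambda>i. d i * d i * d i) = mat_adjoint U * (X * X * X) * U"
    using unitary_unconj[OF Ud(1), of "dmat n (\<lambda>i. d i * d i * d i)"] by simp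
  also have "\<dots> = 0\<^sub>m n n" using z Uc aU by simp
  finally have D0: "dmat n (\<lambda>i. d i * d i * d i) = 0\<^sub>m n n" .
  have "d i = 0" if i: "i < n" for i
  proof -
    have "dmat n (\<lambda>i. d i * d i * d i) $$ (i,i) = 0" using D0 i by simp
    then have "d i * d i * d i = 0" using i by simp
    then show ?thesis by simp
  qed
  then have "dmat n d = dmat n (\<lambda>_. 0)" by (intro dmat_cong) auto
  then have "dmat n d = 0\<^sub>m n n" by (simp add: dmat_zero)
  then show ?thesis using Ud(2) Uc aU by simp
qed

lemma psd_sandwich: fixes X B :: "complex mat"
  assumes B: "psd n B" and X: "X \<in> carrier_mat n n" and h: "hermitian X"
  shows "psd n (X * B * X)"
proof -
  have Bc: "B \<in> carrier_mat n n" and hB: "mat_adjoint B = B" using B unfolding psd_def hermitian_def by auto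
  have hX: "mat_adjoint X = X" using h unfolding hermitian_def .
  have c: "X * B * X \<in> carrier_mat n n" using X Bc by (simp add: sq_mult[of _ n])
  have "mat_adjoint (X * B * X) = mat_adjoint X * mat_adjoint (X * B)"
    using X Bc by (intro adj_mult[of _ n n]) (auto simp: sq_mult[of _ n])
  also have "mat_adjoint (X * B) = mat_adjoint B * mat_adjoint X" using X Bc by (intro adj_mult[of _ n n])
  finally have "hermitian (X * B * X)" unfolding hermitian_def using hX hB X Bc
    by (simp add: sq_assoc[of _ n] sq_mult[of _ n])
  moreover have "0 \<le> Re ((X * B * X *\<^sub>v v) \<bullet>c v)" if v: "v \<in> carrier_vec n" for v
  proof -
    define w where "w = X *\<^sub>v v"
    have w: "w \<in> carrier_vec n" using X v w_def by simp
    have "(X * B * X *\<^sub>v v) = X *\<^sub>v (B *\<^sub>v w)"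
      using X Bc v w_def by (simp add: assoc_mult_mat_vec[of _ n n _ n] sq_mult[of _ n])
    then have "(X * B * X *\<^sub>v v) \<bullet>c v = (B *\<^sub>v w) \<bullet>c w"
      using adj_cscalar[OF X _ v, of "B *\<^sub>v w"] w w_def hX Bc by simp
    then show ?thesis using B w unfolding psd_def by auto
  qed
  ultimately show ?thesis using c unfolding psd_def by auto
qed

lemma mtrace_add: "A \<in> carrier_mat n n \<Longrightarrow> B \<in> carrier_mat n n \<Longrightarrow> mtrace (A + B) = mtrace A + mtrace B"
  unfolding mtrace_def by (simp add: sum.distrib)

lemma mtrace_minus: "A \<in> carrier_mat n n \<Longrightarrow> B \<in> carrier_mat n n \<Longrightarrow> mtrace (A - B) = mtrace A - mtrace B"
  unfolding mtrace_def by (simp add: sum_subtractf)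

lemma tr_expand: fixes B C M :: "complex mat"
  assumes B: "B \<in> carrier_mat n n" and C: "C \<in> carrier_mat n n" and M: "M \<in> carrier_mat n n"
  shows "mtrace ((B - C) * M * (B - C)) = mtrace (B * M * B) - mtrace (C * M * B) - (mtrace (B * M * C) - mtrace (C * M * C))"
proof -
  have BM: "B * M \<in> carrier_mat n n" and CM: "C * M \<in> carrier_mat n n" using B C M by (auto simp: sq_mult[of _ n])
  have "(B - C) * M = B * M - C * M" using B C M by (rule minus_mult_distrib_mat)
  have BMCM: "B * M - C * M \<in> carrier_mat n n" using CM by (rule minus_carrier_mat)
  have "(B - C) * M * (B - C) = (B * M - C * M) * B - (B * M - C * M) * C"
    unfolding \<open>(B - C) * M = B * M - C * M\<close> by (rule mult_minus_distrib_mat[OF BMCM B C])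
  also have "(B * M - C * M) * B = B * M * B - C * M * B" using BM CM B by (rule minus_mult_distrib_mat)
  also have "(B * M - C * M) * C = B * M * C - C * M * C" using BM CM C by (rule minus_mult_distrib_mat)
  finally have e: "(B - C) * M * (B - C) = (B * M * B - C * M * B) - (B * M * C - C * M * C)" .
  have c1: "B * M * B \<in> carrier_mat n n" "C * M * B \<in> carrier_mat n n" "B * M * C \<in> carrier_mat n n" "C * M * C \<in> carrier_mat n n"
    using BM CM B C by (auto simp: sq_mult[of _ n])
  show ?thesis unfolding e using c1
    by (simp add: mtrace_minus[of _ n] minus_carrier_mat)
qed

lemma adj_minus: "A \<in> carrier_mat n m \<Longrightarrow> B \<in> carrier_mat n m \<Longrightarrow> mat_adjoint (A - B :: complex mat) = mat_adjoint A - mat_adjoint B"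
  by (rule eq_matI) auto

lemma psd_sqrt_unique: assumes B: "psd n B" and C: "psd n C" and sq: "B * B = C * C"
  shows "B = C"
proof -
  have Bc: "B \<in> carrier_mat n n" and hB: "mat_adjoint B = B" using B unfolding psd_def hermitian_def by auto
  have Cc: "C \<in> carrier_mat n n" and hC: "mat_adjoint C = C" using C unfolding psd_def hermitian_def by auto
  define X where "X = B - C"
  have Xc: "X \<in> carrier_mat n n" using Bc Cc X_def by (simp add: minus_carrier_mat)
  have hX: "hermitian X" unfolding hermitian_def X_def using adj_minus[OF Bc Cc] hB hC by simp
  define P where "P = B * B"
  have Pc: "P \<in> carrier_mat n n" using Bc P_def by (simp add: sq_mult[of _ n])
  have sq': "C * C = P" using sq P_def by simp
  define \<alpha> where "\<alpha> = mtrace (P * B)"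
  define \<beta> where "\<beta> = mtrace (P * C)"
  have cyc: "mtrace (A1 * A2) = mtrace (A2 * A1)" if "A1 \<in> carrier_mat n n" "A2 \<in> carrier_mat n n" for A1 A2
    using mtrace_cyclic[OF that] .
  have ass: "A1 * A2 * A3 = A1 * (A2 * A3)" if "A1 \<in> carrier_mat n n" "A2 \<in> carrier_mat n n" "A3 \<in> carrier_mat n n" for A1 A2 A3
    using sq_assoc[OF that] .
  note cs = Bc Cc Pc sq_mult[of _ n]
  have t1: "mtrace (B * B * B) = \<alpha>" unfolding \<alpha>_def P_def ..
  have t2: "mtrace (C * B * B) = \<beta>" unfolding \<beta>_def P_def using cs by (simp add: ass cyc[of C])
  have t3: "mtrace (B * B * C) = \<beta>" unfolding \<beta>_def P_def ..
  have t4: "mtrace (C * B * C) = \<alpha>"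
  proof -
    have "mtrace (C * B * C) = mtrace (C * (C * B))" by (rule cyc) (use cs in auto)
    also have "\<dots> = mtrace (C * C * B)" using cs by (simp add: ass[of C C B])
    finally show ?thesis unfolding \<alpha>_def sq' .
  qed
  have t5: "mtrace (B * C * B) = \<beta>"
  proof -
    have "mtrace (B * C * B) = mtrace (B * (B * C))" by (rule cyc) (use cs in auto)
    also have "\<dots> = mtrace (B * B * C)" using cs by (simp add: ass[of B B C])
    finally show ?thesis unfolding \<beta>_def P_def .
  qed
  have t6: "mtrace (C * C * B) = \<alpha>" unfolding \<alpha>_def sq' ..
  have t7: "mtrace (B * C * C) = \<alpha>"
  proof -
    have "mtrace (B * C * C) = mtrace (B * (C * C))" using cs by (simp add: ass)
    also have "\<dots> = mtrace ((C * C) * B)" by (rule cyc) (use cs in auto)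
    finally show ?thesis unfolding \<alpha>_def sq' .
  qed
  have t8: "mtrace (C * C * C) = \<beta>" unfolding \<beta>_def sq' ..
  have sum0: "mtrace (X * B * X) + mtrace (X * C * X) = 0"
    unfolding X_def tr_expand[OF Bc Cc Bc] tr_expand[OF Bc Cc Cc] t1 t2 t3 t4 t5 t6 t7 t8 by simp
  have pB: "psd n (X * B * X)" by (rule psd_sandwich[OF B Xc hX])
  have pC: "psd n (X * C * X)" by (rule psd_sandwich[OF C Xc hX])
  have "Re (mtrace (X * B * X)) = 0" "Re (mtrace (X * C * X)) = 0"
    using psd_trace(2)[OF pB] psd_trace(2)[OF pC] arg_cong[OF sum0, of Re] by auto
  then have "mtrace (X * B * X) = 0" "mtrace (X * C * X) = 0"
    using psd_trace(1)[OF pB] psd_trace(1)[OF pC] by auto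
  then have z1: "X * B * X = 0\<^sub>m n n" and z2: "X * C * X = 0\<^sub>m n n"
    using psd_trace_zero[OF pB] psd_trace_zero[OF pC] by auto
  have "X * X = X * B - X * C" unfolding X_def using Bc Cc by (intro mult_minus_distrib_mat) (auto simp: minus_carrier_mat)
  then have "X * X * X = X * B * X - X * C * X"
    using Xc Bc Cc by (simp add: minus_mult_distrib_mat[of _ n n] sq_mult[of _ n])
  also have "\<dots> = 0\<^sub>m n n" unfolding z1 z2 by (rule eq_matI) auto
  finally have X0: "X = 0\<^sub>m n n" using herm_cube_zero[OF Xc hX] by simp
  show "B = C"
  proof (rule eq_matI)
    fix i j assume "i < dim_row C" "j < dim_col C"
    then have ij: "i < n" "j < n" using Cc by auto
    have "(B - C) $$ (i,j) = 0" using X0 X_def ij by simp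
    then show "B $$ (i,j) = C $$ (i,j)" using ij Bc Cc by simp
  qed (use Bc Cc in auto)
qed

lemma psd_sqrt_conj: assumes U: "unitary n U" and d: "\<And>i. i < n \<Longrightarrow> d i \<ge> 0"
  shows "psd_sqrt (U * dmat n d * mat_adjoint U) = U * dmat n (\<lambda>i. sqrt (d i)) * mat_adjoint U"
proof -
  let ?A = "U * dmat n d * mat_adjoint U"
  let ?S = "U * dmat n (\<lambda>i. sqrt (d i)) * mat_adjoint U"
  have dimA: "dim_row ?A = n" using unitary_carrier[OF U] by simp
  have pS: "psd n ?S" using psd_conj_dmat[OF U] d by simp
  have "?S * ?S = U * dmat n (\<lambda>i. sqrt (d i) * sqrt (d i)) * mat_adjoint U"
    by (rule unitary_conj_dmat_mult[OF U])
  also have "dmat n (\<lambda>i. sqrt (d i) * sqrt (d i)) = dmat n d" using d by (intro dmat_cong) simp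
  finally have SS: "?S * ?S = ?A" .
  show ?thesis unfolding psd_sqrt_def dimA
  proof (rule the_equality)
    show "psd n ?S \<and> ?S * ?S = ?A" using pS SS by simp
    fix B assume "psd n B \<and> B * B = ?A"
    then show "B = ?S" using psd_sqrt_unique[of n B ?S] pS SS by simp
  qed
qed

lemma tr_half_pow_formula: fixes M :: "complex mat"
  assumes U: "unitary n U" and d: "\<And>i. i < n \<Longrightarrow> d i \<ge> 0"
    and MM: "M * mat_adjoint M = U * dmat n d * mat_adjoint U"
  shows "tr_half_pow M k = (\<Sum>i<n. sqrt (d i) ^ k)"
proof -
  have ps: "psd_sqrt (M * mat_adjoint M) = U * dmat n (\<lambda>i. sqrt (d i)) * mat_adjoint U"
    unfolding MM by (rule psd_sqrt_conj[OF U d])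
  have "tr_half_pow M k = Re (mtrace ((U * dmat n (\<lambda>i. sqrt (d i)) * mat_adjoint U) ^\<^sub>m k))"
    unfolding tr_half_pow_def ps ..
  also have "\<dots> = Re (mtrace (U * dmat n (\<lambda>i. sqrt (d i) ^ k) * mat_adjoint U))"
    by (simp add: unitary_conj_pow[OF U])
  also have "\<dots> = (\<Sum>i<n. sqrt (d i) ^ k)" by (simp add: mtrace_conj_dmat[OF U])
  finally show ?thesis .
qed


lemma kron_carrier: "A \<in> carrier_mat d1 d1 \<Longrightarrow> B \<in> carrier_mat d2 d2 \<Longrightarrow> kron A B \<in> carrier_mat (d1*d2) (d1*d2)"
  unfolding kron_def carrier_mat_def by simp

lemma kron_index: "A \<in> carrier_mat d1 d1 \<Longrightarrow> B \<in> carrier_mat d2 d2 \<Longrightarrow> i < d1*d2 \<Longrightarrow> j < d1*d2 \<Longrightarrow>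
  kron A B $$ (i,j) = A $$ (i div d2, j div d2) * B $$ (i mod d2, j mod d2)"
  unfolding kron_def carrier_mat_def by simp

lemma mtrace_mult_sum: "A \<in> carrier_mat n m \<Longrightarrow> B \<in> carrier_mat m n \<Longrightarrow>
  mtrace (A * B) = (\<Sum>i<n. \<Sum>j<m. A $$ (i,j) * B $$ (j,i))"
  unfolding mtrace_def by (simp add: scalar_prod_def atLeast0LessThan)

lemma kron_trace: fixes A P B Q :: "complex mat"
  assumes A: "A \<in> carrier_mat d1 d1" and P: "P \<in> carrier_mat d1 d1"
    and B: "B \<in> carrier_mat d2 d2" and Q: "Q \<in> carrier_mat d2 d2"
  shows "mtrace (kron A B * kron P Q) = mtrace (A * P) * mtrace (B * Q)"
proof -
  have "mtrace (kron A B * kron P Q) = (\<Sum>i<d1*d2. \<Sum>j<d1*d2. kron A B $$ (i,j) * kron P Q $$ (j,i))"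
    using kron_carrier[OF A B] kron_carrier[OF P Q] by (rule mtrace_mult_sum)
  also have "\<dots> = (\<Sum>a<d1. \<Sum>b<d2. \<Sum>c<d1. \<Sum>e<d2. A $$ (a,c) * B $$ (b,e) * (P $$ (c,a) * Q $$ (e,b)))"
  proof -
    have "(\<Sum>i<d1*d2. \<Sum>j<d1*d2. kron A B $$ (i,j) * kron P Q $$ (j,i))
       = (\<Sum>a<d1. \<Sum>b<d2. \<Sum>j<d1*d2. kron A B $$ (a*d2+b,j) * kron P Q $$ (j,a*d2+b))"
      by (rule sum_divmod)
    also have "\<dots> = (\<Sum>a<d1. \<Sum>b<d2. \<Sum>c<d1. \<Sum>e<d2. kron A B $$ (a*d2+b,c*d2+e) * kron P Q $$ (c*d2+e,a*d2+b))"
      by (simp only: sum_divmod)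
    also have "\<dots> = (\<Sum>a<d1. \<Sum>b<d2. \<Sum>c<d1. \<Sum>e<d2. A $$ (a,c) * B $$ (b,e) * (P $$ (c,a) * Q $$ (e,b)))"
    proof (intro sum.cong refl)
      fix a b c e assume "a \<in> {..<d1}" "b \<in> {..<d2}" "c \<in> {..<d1}" "e \<in> {..<d2}"
      then have a: "a < d1" and b: "b < d2" and c: "c < d1" and e: "e < d2" by auto
      have lt: "x * d2 + y < d1 * d2" if "x < d1" "y < d2" for x y
      proof -
        have "x * d2 + y < x * d2 + d2" using that by simp
        also have "\<dots> = Suc x * d2" by simp
        also have "\<dots> \<le> d1 * d2" using that by (intro mult_le_mono1) simp
        finally show ?thesis .
      qed
      have d1: "(a*d2+b) div d2 = a" "(a*d2+b) mod d2 = b" "(c*d2+e) div d2 = c" "(c*d2+e) mod d2 = e"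
        using b e by auto
      show "kron A B $$ (a*d2+b,c*d2+e) * kron P Q $$ (c*d2+e,a*d2+b) = A $$ (a,c) * B $$ (b,e) * (P $$ (c,a) * Q $$ (e,b))"
        using kron_index[OF A B lt[OF a b] lt[OF c e]] kron_index[OF P Q lt[OF c e] lt[OF a b]] d1 by simp
    qed
    finally show ?thesis .
  qed
  also have "\<dots> = (\<Sum>a<d1. \<Sum>c<d1. \<Sum>b<d2. \<Sum>e<d2. A $$ (a,c) * B $$ (b,e) * (P $$ (c,a) * Q $$ (e,b)))"
    by (rule sum.cong[OF refl], rule sum.swap)
  also have "\<dots> = (\<Sum>a<d1. \<Sum>c<d1. \<Sum>b<d2. \<Sum>e<d2. A $$ (a,c) * P $$ (c,a) * (B $$ (b,e) * Q $$ (e,b)))"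
    by (simp add: mult_ac)
  also have "\<dots> = (\<Sum>a<d1. \<Sum>c<d1. A $$ (a,c) * P $$ (c,a)) * (\<Sum>b<d2. \<Sum>e<d2. B $$ (b,e) * Q $$ (e,b))"
  proof -
    have "(\<Sum>a<d1. \<Sum>c<d1. A $$ (a,c) * P $$ (c,a)) * (\<Sum>b<d2. \<Sum>e<d2. B $$ (b,e) * Q $$ (e,b))
      = (\<Sum>a<d1. \<Sum>c<d1. A $$ (a,c) * P $$ (c,a) * (\<Sum>b<d2. \<Sum>e<d2. B $$ (b,e) * Q $$ (e,b)))"
      by (simp only: sum_distrib_right)
    also have "\<dots> = (\<Sum>a<d1. \<Sum>c<d1. \<Sum>b<d2. \<Sum>e<d2. A $$ (a,c) * P $$ (c,a) * (B $$ (b,e) * Q $$ (e,b)))"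
      by (simp only: sum_distrib_left)
    finally show ?thesis by (rule sym)
  qed
  also have "\<dots> = mtrace (A * P) * mtrace (B * Q)"
    using mtrace_mult_sum[OF A P] mtrace_mult_sum[OF B Q] by simp
  finally show ?thesis .
qed

lemma mtrace_matsum: fixes F :: "nat \<Rightarrow> complex mat"
  assumes F: "\<And>k. k < m \<Longrightarrow> F k \<in> carrier_mat n n" and K: "K \<in> carrier_mat n n"
  shows "mtrace (mat n n (\<lambda>ij. \<Sum>k<m. c k * F k $$ ij) * K) = (\<Sum>k<m. c k * mtrace (F k * K))"
proof -
  have "mtrace (mat n n (\<lambda>ij. \<Sum>k<m. c k * F k $$ ij) * K) = (\<Sum>i<n. \<Sum>j<n. mat n n (\<lambda>ij. \<Sum>k<m. c k * F k $$ ij) $$ (i,j) * K $$ (j,i))"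
    by (rule mtrace_mult_sum) (use K in auto)
  also have "\<dots> = (\<Sum>i<n. \<Sum>j<n. (\<Sum>k<m. c k * F k $$ (i,j)) * K $$ (j,i))"
    by (intro sum.cong refl) auto
  also have "\<dots> = (\<Sum>i<n. \<Sum>j<n. \<Sum>k<m. c k * (F k $$ (i,j) * K $$ (j,i)))"
    by (simp add: sum_distrib_right sum_distrib_left mult_ac)
  also have "\<dots> = (\<Sum>i<n. \<Sum>k<m. \<Sum>j<n. c k * (F k $$ (i,j) * K $$ (j,i)))"
    by (rule sum.cong[OF refl], rule sum.swap)
  also have "\<dots> = (\<Sum>k<m. \<Sum>i<n. \<Sum>j<n. c k * (F k $$ (i,j) * K $$ (j,i)))"
    by (rule sum.swap)
  also have "\<dots> = (\<Sum>k<m. c k * mtrace (F k * K))"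
  proof (intro sum.cong refl)
    fix k assume "k \<in> {..<m}"
    then have "F k \<in> carrier_mat n n" using F by auto
    then show "(\<Sum>i<n. \<Sum>j<n. c k * (F k $$ (i,j) * K $$ (j,i))) = c k * mtrace (F k * K)"
      using mtrace_mult_sum[OF _ K] by (simp add: sum_distrib_left)
  qed
  finally show ?thesis .
qed

lemma sep_trace: fixes P Q :: "complex mat" and A B :: "nat \<Rightarrow> complex mat" and p :: "nat \<Rightarrow> real"
  assumes rho: "\<rho> = mat (d1 * d2) (d1 * d2) (\<lambda>ij. \<Sum>k<m. complex_of_real (p k) * kron (A k) (B k) $$ ij)"
    and AB: "\<And>k. k < m \<Longrightarrow> A k \<in> carrier_mat d1 d1 \<and> B k \<in> carrier_mat d2 d2"
    and P: "P \<in> carrier_mat d1 d1" and Q: "Q \<in> carrier_mat d2 d2"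
  shows "mtrace (\<rho> * kron P Q) = (\<Sum>k<m. complex_of_real (p k) * (mtrace (A k * P) * mtrace (B k * Q)))"
proof -
  have "mtrace (\<rho> * kron P Q) = (\<Sum>k<m. complex_of_real (p k) * mtrace (kron (A k) (B k) * kron P Q))"
    unfolding rho using AB kron_carrier[OF P Q]
    by (intro mtrace_matsum[where F="\<lambda>k. kron (A k) (B k)" and c="\<lambda>k. complex_of_real (p k)"]) (auto intro: kron_carrier)
  also have "\<dots> = (\<Sum>k<m. complex_of_real (p k) * (mtrace (A k * P) * mtrace (B k * Q)))"
    using AB by (intro sum.cong refl) (simp add: kron_trace[OF _ P _ Q])
  finally show ?thesis .
qed

lemma frob_herm: fixes X Y :: "complex mat"
  assumes X: "X \<in> carrier_mat d d" and Y: "Y \<in> carrier_mat d d" and h: "hermitian Y"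
  shows "(\<Sum>p\<in>{..<d}\<times>{..<d}. X $$ p * cnj (Y $$ p)) = mtrace (X * Y)"
proof -
  have hY: "cnj (Y $$ (a,b)) = Y $$ (b,a)" if "a < d" "b < d" for a b
    using adj_index[of b Y a] h Y that unfolding hermitian_def by auto
  have "(\<Sum>p\<in>{..<d}\<times>{..<d}. X $$ p * cnj (Y $$ p)) = (\<Sum>a<d. \<Sum>b<d. X $$ (a,b) * cnj (Y $$ (a,b)))"
    by (simp add: sum.cartesian_product)
  also have "\<dots> = (\<Sum>a<d. \<Sum>b<d. X $$ (a,b) * Y $$ (b,a))"
    using hY by (intro sum.cong refl) auto
  also have "\<dots> = mtrace (X * Y)" using mtrace_mult_sum[OF X Y] by simp
  finally show ?thesis .
qed

lemma one_hermitian: "hermitian (1\<^sub>m d :: complex mat)"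
  unfolding hermitian_def by simp

lemma mtrace_one_right: "A \<in> carrier_mat d d \<Longrightarrow> mtrace (A * 1\<^sub>m d) = mtrace A"
  by simp

lemma mtrace_one: "mtrace (1\<^sub>m d :: complex mat) = of_nat d"
  unfolding mtrace_def by simp

lemma state_purity: assumes "is_state d A"
  shows "Re (mtrace (A * A)) \<le> 1"
proof -
  have ps: "psd d A" and t: "mtrace A = 1" using assms unfolding is_state_def by auto
  obtain U e where Ue: "unitary d U" "A = U * dmat d e * mat_adjoint U" "\<forall>i<d. e i \<ge> 0"
    using psd_spectral[OF ps] by blast
  have "complex_of_real (\<Sum>i<d. e i) = 1" using mtrace_conj_dmat[OF Ue(1), of e] Ue(2) t by simp
  then have s1: "(\<Sum>i<d. e i) = 1" by (metis of_real_eq_1_iff)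
  have le1: "e i \<le> 1" if "i < d" for i
  proof -
    have "e i \<le> (\<Sum>i<d. e i)" using Ue(3) that by (intro member_le_sum) auto
    then show ?thesis using s1 by simp
  qed
  have "mtrace (A * A) = complex_of_real (\<Sum>i<d. e i * e i)"
    unfolding Ue(2) unitary_conj_dmat_mult[OF Ue(1)] mtrace_conj_dmat[OF Ue(1)] by simp
  then have "Re (mtrace (A * A)) = (\<Sum>i<d. e i * e i)" by simp
  also have "\<dots> \<le> (\<Sum>i<d. e i)" using le1 Ue(3) by (intro sum_mono) (auto intro: mult_left_le_one_le)
  finally show ?thesis using s1 by simp
qed


lemma bloch_bound:
  fixes A :: "complex mat" and L :: "nat \<Rightarrow> complex mat"
  assumes d: "d \<ge> 1" and L: "su_generators d L" and A: "is_state d A"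
  shows "(\<Sum>i<d^2-1. (cmod (mtrace (A * L i) / 2))^2) \<le> (real d - 1) / (2 * real d)"
proof -
  define N where "N = d^2 - 1"
  define J where "J = {..<d}\<times>{..<d}"
  have Ac: "A \<in> carrier_mat d d" and hA: "hermitian A" and trA: "mtrace A = 1"
    using A unfolding is_state_def psd_def by auto
  have Lp: "L i \<in> carrier_mat d d \<and> hermitian (L i) \<and> mtrace (L i) = 0" if "i < N" for i
    using L that unfolding su_generators_def N_def by auto
  have Lo: "mtrace (L i * L j) = (if i = j then 2 else 0)" if "i < N" "j < N" for i j
    using L that unfolding su_generators_def N_def by auto
  define g where "g i = (if i < N then L i else 1\<^sub>m d)" for i
  define w where "w i = (if i < N then 1 / sqrt 2 else 1 / sqrt (real d))" for i
  define f where "f i p = complex_of_real (w i) * g i $$ p" for i p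
  have gc: "g i \<in> carrier_mat d d" "hermitian (g i)" for i
    using Lp one_hermitian unfolding g_def by auto
  have dpos: "real d > 0" using d by simp
  have w2: "w i * w i = (if i < N then 1/2 else 1 / real d)" for i
    unfolding w_def using dpos by (auto simp: field_simps)
  have trg: "complex_of_real (w i * w l) * mtrace (g i * g l) = (if i = l then 1 else 0)"
    if i: "i < Suc N" and l: "l < Suc N" for i l
  proof (cases "i < N")
    case True
    note iN = True
    show ?thesis
    proof (cases "l < N")
      case True
      then show ?thesis using iN Lo[OF iN True] w2[of i] unfolding g_def
        by (cases "i = l") (auto simp: w_def)
    next
      case False
      then have "l = N" using l by simp
      then show ?thesis using iN Lp[OF iN] unfolding g_def by auto
    qed
  next
    case False
    then have iN: "i = N" using i by simp
    show ?thesis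
    proof (cases "l < N")
      case True
      then show ?thesis using iN Lp[OF True] unfolding g_def by auto
    next
      case False
      then have "l = N" using l by simp
      then have "complex_of_real (w i * w l) * mtrace (g i * g l) = complex_of_real (1 / real d) * of_nat d"
        using iN w2[of N] unfolding g_def by (simp add: mtrace_one)
      also have "\<dots> = 1" using dpos by (simp add: field_simps)
      finally show ?thesis using iN \<open>l = N\<close> by simp
    qed
  qed
  have orth: "(\<Sum>p\<in>J. f i p * cnj (f l p)) = (if i = l then 1 else 0)"
    if "i \<in> {..<Suc N}" "l \<in> {..<Suc N}" for i l
  proof -
    have "(\<Sum>p\<in>J. f i p * cnj (f l p)) = complex_of_real (w i * w l) * (\<Sum>p\<in>J. g i $$ p * cnj (g l $$ p))"
      unfolding f_def by (simp add: sum_distrib_left mult_ac)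
    also have "(\<Sum>p\<in>J. g i $$ p * cnj (g l $$ p)) = mtrace (g i * g l)"
      unfolding J_def by (rule frob_herm[OF gc(1) gc(1) gc(2)])
    finally show ?thesis using trg that by simp
  qed
  have B: "(\<Sum>i\<in>{..<Suc N}. (cmod (\<Sum>p\<in>J. A $$ p * cnj (f i p)))^2) \<le> (\<Sum>p\<in>J. (cmod (A $$ p))^2)"
    by (rule bessel[OF _ _ orth]) (auto simp: J_def)
  have coef: "(\<Sum>p\<in>J. A $$ p * cnj (f i p)) = complex_of_real (w i) * mtrace (A * g i)" for i
  proof -
    have "(\<Sum>p\<in>J. A $$ p * cnj (f i p)) = complex_of_real (w i) * (\<Sum>p\<in>J. A $$ p * cnj (g i $$ p))"
      unfolding f_def by (simp add: sum_distrib_left mult_ac)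
    also have "(\<Sum>p\<in>J. A $$ p * cnj (g i $$ p)) = mtrace (A * g i)"
      unfolding J_def by (rule frob_herm[OF Ac gc(1) gc(2)])
    finally show ?thesis .
  qed
  have cm: "(cmod (\<Sum>p\<in>J. A $$ p * cnj (f i p)))^2 = w i * w i * (cmod (mtrace (A * g i)))^2" for i
    unfolding coef by (simp add: norm_mult power2_eq_square abs_mult_self_eq)
  have lhs: "(\<Sum>i\<in>{..<Suc N}. (cmod (\<Sum>p\<in>J. A $$ p * cnj (f i p)))^2)
      = (\<Sum>i<N. (cmod (mtrace (A * L i)))^2 / 2) + 1 / real d"
  proof -
    have "(\<Sum>i\<in>{..<Suc N}. (cmod (\<Sum>p\<in>J. A $$ p * cnj (f i p)))^2)
        = (\<Sum>i<N. w i * w i * (cmod (mtrace (A * g i)))^2) + w N * w N * (cmod (mtrace (A * g N)))^2"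
      unfolding cm by simp
    also have "(\<Sum>i<N. w i * w i * (cmod (mtrace (A * g i)))^2) = (\<Sum>i<N. (cmod (mtrace (A * L i)))^2 / 2)"
      by (intro sum.cong refl) (simp add: w2 g_def)
    also have "w N * w N * (cmod (mtrace (A * g N)))^2 = 1 / real d"
      using w2[of N] trA Ac unfolding g_def by simp
    finally show ?thesis .
  qed
  have rhs: "(\<Sum>p\<in>J. (cmod (A $$ p))^2) \<le> 1"
  proof -
    have "complex_of_real (\<Sum>p\<in>J. (cmod (A $$ p))^2) = (\<Sum>p\<in>J. A $$ p * cnj (A $$ p))"
      by (simp only: of_real_sum complex_norm_square)
    also have "\<dots> = mtrace (A * A)" unfolding J_def by (rule frob_herm[OF Ac Ac hA])
    finally have "(\<Sum>p\<in>J. (cmod (A $$ p))^2) = Re (mtrace (A * A))"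
      by (metis Re_complex_of_real)
    then show ?thesis using state_purity[OF A] by simp
  qed
  have "(\<Sum>i<N. (cmod (mtrace (A * L i)))^2 / 2) + 1 / real d \<le> 1" using B lhs rhs by linarith
  then have "(\<Sum>i<N. (cmod (mtrace (A * L i)))^2) \<le> 2 * (1 - 1 / real d)"
    by (simp add: sum_divide_distrib[symmetric])
  moreover have "(\<Sum>i<N. (cmod (mtrace (A * L i) / 2))^2) = (\<Sum>i<N. (cmod (mtrace (A * L i)))^2) / 4"
    by (simp add: sum_divide_distrib norm_divide power_divide)
  moreover have "2 * (1 - 1 / real d) / 4 = (real d - 1) / (2 * real d)" using dpos by (simp add: field_simps)
  ultimately show ?thesis unfolding N_def
    by (metis divide_right_mono zero_le_numeral)
qed


lemma unitary_cols: assumes U: "unitary n U" and i: "i < n" and l: "l < n"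
  shows "(\<Sum>a<n. U $$ (a,i) * cnj (U $$ (a,l))) = (if i = l then 1 else 0)"
proof -
  have Uc: "U \<in> carrier_mat n n" using U unitary_carrier by auto
  have "(\<Sum>a<n. U $$ (a,i) * cnj (U $$ (a,l))) = (mat_adjoint U * U) $$ (l,i)"
    using Uc i l by (simp add: scalar_prod_def atLeast0LessThan mult.commute)
  also have "\<dots> = (if i = l then 1 else 0)" using unitary_left[OF U] i l by auto
  finally show ?thesis .
qed

lemma trace_norm_bound:
  fixes T U :: "complex mat" and x y :: "nat \<Rightarrow> nat \<Rightarrow> complex" and p :: "nat \<Rightarrow> real" and d :: "nat \<Rightarrow> real"
  assumes T: "T \<in> carrier_mat m1 m2"
    and Tdef: "\<And>i j. i < m1 \<Longrightarrow> j < m2 \<Longrightarrow> T $$ (i,j) = (\<Sum>k<K. complex_of_real (p k) * x k i * y k j)"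
    and p: "\<And>k. k < K \<Longrightarrow> p k \<ge> 0"
    and U: "unitary m1 U" and d: "\<And>i. i < m1 \<Longrightarrow> d i \<ge> 0"
    and TT: "T * mat_adjoint T = U * dmat m1 d * mat_adjoint U"
  shows "(\<Sum>i<m1. sqrt (d i)) \<le> (\<Sum>k<K. p k * (sqrt (\<Sum>i<m1. (cmod (x k i))^2) * sqrt (\<Sum>j<m2. (cmod (y k j))^2)))"
proof -
  have Uc: "U \<in> carrier_mat m1 m1" and aU: "mat_adjoint U \<in> carrier_mat m1 m1"
    using U unitary_carrier unitary_adj_carrier by auto
  have aT: "mat_adjoint T \<in> carrier_mat m2 m1" using T by simp
  define G where "G = mat_adjoint U * T"
  have Gc: "G \<in> carrier_mat m1 m2" unfolding G_def using aU T by (rule mult_carrier_mat)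
  have GG: "G * mat_adjoint G = dmat m1 d"
  proof -
    have aG: "mat_adjoint G = mat_adjoint T * U" unfolding G_def using adj_mult[OF aU T] by simp
    have TU: "mat_adjoint T * U \<in> carrier_mat m2 m1" using aT Uc by (rule mult_carrier_mat)
    have TTc: "T * mat_adjoint T \<in> carrier_mat m1 m1" using T aT by (rule mult_carrier_mat)
    have "G * mat_adjoint G = mat_adjoint U * (T * (mat_adjoint T * U))"
      unfolding aG unfolding G_def by (rule assoc_mult_mat[OF aU T TU])
    also have "T * (mat_adjoint T * U) = (T * mat_adjoint T) * U"
      by (rule assoc_mult_mat[OF T aT Uc, symmetric])
    also have "mat_adjoint U * ((T * mat_adjoint T) * U) = mat_adjoint U * (T * mat_adjoint T) * U"
      by (rule assoc_mult_mat[OF aU TTc Uc, symmetric])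
    also have "\<dots> = dmat m1 d" unfolding TT by (rule unitary_unconj[OF U dmat_carrier(1)])
    finally show ?thesis .
  qed
  have Gent: "(\<Sum>j<m2. G $$ (i,j) * cnj (G $$ (l,j))) = (if i = l then complex_of_real (d i) else 0)"
    if il: "i < m1" "l < m1" for i l
  proof -
    have "(G * mat_adjoint G) $$ (i,l) = (\<Sum>j<m2. G $$ (i,j) * cnj (G $$ (l,j)))"
      using Gc il by (simp add: scalar_prod_def atLeast0LessThan)
    then show ?thesis using GG il by simp
  qed
  define X where "X k i = (\<Sum>a<m1. x k a * cnj (U $$ (a,i)))" for k i
  have Gx: "G $$ (i,j) = (\<Sum>k<K. complex_of_real (p k) * X k i * y k j)" if ij: "i < m1" "j < m2" for i j
  proof -
    have "G $$ (i,j) = (\<Sum>a<m1. cnj (U $$ (a,i)) * T $$ (a,j))"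
      unfolding G_def using ij Uc T by (simp add: scalar_prod_def atLeast0LessThan)
    also have "\<dots> = (\<Sum>a<m1. cnj (U $$ (a,i)) * (\<Sum>k<K. complex_of_real (p k) * x k a * y k j))"
      by (intro sum.cong refl) (simp add: Tdef ij)
    also have "\<dots> = (\<Sum>a<m1. \<Sum>k<K. complex_of_real (p k) * (x k a * cnj (U $$ (a,i))) * y k j)"
      by (simp add: sum_distrib_left mult_ac)
    also have "\<dots> = (\<Sum>k<K. \<Sum>a<m1. complex_of_real (p k) * (x k a * cnj (U $$ (a,i))) * y k j)"
      by (rule sum.swap)
    also have "\<dots> = (\<Sum>k<K. complex_of_real (p k) * X k i * y k j)"
      unfolding X_def by (simp add: sum_distrib_left sum_distrib_right mult_ac)
    finally show ?thesis .
  qed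
  define \<sigma> where "\<sigma> i = sqrt (d i)" for i
  define I where "I = {i. i < m1 \<and> d i > 0}"
  have Ifin: "finite I" unfolding I_def by simp
  have Isub: "I \<subseteq> {..<m1}" unfolding I_def by auto
  have sI: "(\<Sum>i<m1. \<sigma> i) = (\<Sum>i\<in>I. \<sigma> i)"
  proof (rule sum.mono_neutral_right)
    show "\<forall>i\<in>{..<m1} - I. \<sigma> i = 0"
    proof
      fix i assume "i \<in> {..<m1} - I"
      then have "i < m1" "\<not> d i > 0" unfolding I_def by auto
      then have "d i = 0" using d[of i] by simp
      then show "\<sigma> i = 0" unfolding \<sigma>_def by simp
    qed
  qed (use Isub in auto)
  have sigpos: "\<sigma> i > 0" if "i \<in> I" for i using that unfolding I_def \<sigma>_def by auto
  have sigsq: "\<sigma> i * \<sigma> i = d i" if "i \<in> I" for i using that unfolding I_def \<sigma>_def by auto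
  define h where "h i j = G $$ (i,j) / complex_of_real (\<sigma> i)" for i j
  define c where "c k i = (\<Sum>j<m2. y k j * cnj (h i j))" for k i
  have key: "complex_of_real (\<Sum>i\<in>I. \<sigma> i) = (\<Sum>k<K. complex_of_real (p k) * (\<Sum>i\<in>I. X k i * c k i))"
  proof -
    have "complex_of_real (\<Sum>i\<in>I. \<sigma> i) = (\<Sum>i\<in>I. (\<Sum>j<m2. G $$ (i,j) * cnj (h i j)))"
      unfolding of_real_sum
    proof (intro sum.cong refl)
      fix i assume i: "i \<in> I"
      then have im: "i < m1" using Isub by auto
      have "(\<Sum>j<m2. G $$ (i,j) * cnj (h i j)) = (\<Sum>j<m2. G $$ (i,j) * cnj (G $$ (i,j))) / complex_of_real (\<sigma> i)"
        unfolding h_def by (simp add: sum_divide_distrib)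
      also have "\<dots> = complex_of_real (d i) / complex_of_real (\<sigma> i)" using Gent[OF im im] by simp
      also have "\<dots> = complex_of_real (\<sigma> i)" using sigsq[OF i] sigpos[OF i]
        by (simp add: field_simps flip: of_real_mult)
      finally show "complex_of_real (\<sigma> i) = (\<Sum>j<m2. G $$ (i,j) * cnj (h i j))" by simp
    qed
    also have "\<dots> = (\<Sum>i\<in>I. \<Sum>j<m2. (\<Sum>k<K. complex_of_real (p k) * X k i * y k j) * cnj (h i j))"
      using Isub by (intro sum.cong refl) (auto simp: Gx)
    also have "\<dots> = (\<Sum>i\<in>I. \<Sum>j<m2. \<Sum>k<K. complex_of_real (p k) * (X k i * (y k j * cnj (h i j))))"
      by (simp add: sum_distrib_right sum_distrib_left mult_ac)
    also have "\<dots> = (\<Sum>i\<in>I. \<Sum>k<K. \<Sum>j<m2. complex_of_real (p k) * (X k i * (y k j * cnj (h i j))))"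
      by (rule sum.cong[OF refl], rule sum.swap)
    also have "\<dots> = (\<Sum>k<K. \<Sum>i\<in>I. \<Sum>j<m2. complex_of_real (p k) * (X k i * (y k j * cnj (h i j))))"
      by (rule sum.swap)
    also have "\<dots> = (\<Sum>k<K. complex_of_real (p k) * (\<Sum>i\<in>I. X k i * c k i))"
      unfolding c_def by (simp add: sum_distrib_left)
    finally show ?thesis .
  qed
  have orthU: "(\<Sum>a\<in>{..<m1}. U $$ (a,i) * cnj (U $$ (a,l))) = (if i = l then 1 else 0)"
    if "i \<in> I" "l \<in> I" for i l
  proof -
    have "i < m1" "l < m1" using that Isub by auto
    then show ?thesis using unitary_cols[OF U, of i l] by simp
  qed
  have orthh: "(\<Sum>j\<in>{..<m2}. h i j * cnj (h l j)) = (if i = l then 1 else 0)"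
    if il: "i \<in> I" "l \<in> I" for i l
  proof -
    have im: "i < m1" and lm: "l < m1" using il Isub by auto
    have "(\<Sum>j\<in>{..<m2}. h i j * cnj (h l j)) = (\<Sum>j<m2. G $$ (i,j) * cnj (G $$ (l,j))) / (complex_of_real (\<sigma> i) * complex_of_real (\<sigma> l))"
      unfolding h_def by (simp add: sum_divide_distrib)
    also have "\<dots> = (if i = l then 1 else 0)"
      using Gent[OF im lm] sigsq[OF il(1)] sigpos[OF il(1)] by (cases "i = l") (auto simp flip: of_real_mult)
    finally show ?thesis .
  qed
  have bound_k: "cmod (\<Sum>i\<in>I. X k i * c k i) \<le> sqrt (\<Sum>i<m1. (cmod (x k i))^2) * sqrt (\<Sum>j<m2. (cmod (y k j))^2)" for k
  proof -
    have "cmod (\<Sum>i\<in>I. X k i * c k i) \<le> sqrt (\<Sum>i\<in>I. (cmod (X k i))^2) * sqrt (\<Sum>i\<in>I. (cmod (c k i))^2)"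
      by (rule cs_complex[OF Ifin])
    also have "\<dots> \<le> sqrt (\<Sum>i<m1. (cmod (x k i))^2) * sqrt (\<Sum>j<m2. (cmod (y k j))^2)"
    proof (rule mult_mono)
      have "(\<Sum>i\<in>I. (cmod (X k i))^2) \<le> (\<Sum>a\<in>{..<m1}. (cmod (x k a))^2)"
        unfolding X_def by (rule bessel[OF _ Ifin orthU]) auto
      then show "sqrt (\<Sum>i\<in>I. (cmod (X k i))^2) \<le> sqrt (\<Sum>i<m1. (cmod (x k i))^2)"
        by (rule real_sqrt_le_mono)
      have "(\<Sum>i\<in>I. (cmod (c k i))^2) \<le> (\<Sum>j\<in>{..<m2}. (cmod (y k j))^2)"
        unfolding c_def by (rule bessel[OF _ Ifin orthh]) auto
      then show "sqrt (\<Sum>i\<in>I. (cmod (c k i))^2) \<le> sqrt (\<Sum>j<m2. (cmod (y k j))^2)"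
        by (rule real_sqrt_le_mono)
    qed (auto intro: sum_nonneg)
    finally show ?thesis .
  qed
  have "(\<Sum>i<m1. sqrt (d i)) = (\<Sum>i\<in>I. \<sigma> i)" using sI unfolding \<sigma>_def by simp
  also have "\<dots> = cmod (complex_of_real (\<Sum>i\<in>I. \<sigma> i))"
  proof -
    have "(\<Sum>i\<in>I. \<sigma> i) \<ge> 0" using sigpos by (intro sum_nonneg) (auto intro: less_imp_le)
    then show ?thesis by (simp only: norm_of_real abs_of_nonneg)
  qed
  also have "\<dots> = cmod (\<Sum>k<K. complex_of_real (p k) * (\<Sum>i\<in>I. X k i * c k i))" unfolding key ..
  also have "\<dots> \<le> (\<Sum>k<K. cmod (complex_of_real (p k) * (\<Sum>i\<in>I. X k i * c k i)))" by (rule norm_sum)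
  also have "\<dots> = (\<Sum>k<K. p k * cmod (\<Sum>i\<in>I. X k i * c k i))"
    using p by (intro sum.cong refl) (simp add: norm_mult)
  also have "\<dots> \<le> (\<Sum>k<K. p k * (sqrt (\<Sum>i<m1. (cmod (x k i))^2) * sqrt (\<Sum>j<m2. (cmod (y k j))^2)))"
    using p bound_k by (intro sum_mono mult_left_mono) auto
  finally show ?thesis .
qed


lemma power_sum_ineq: fixes s :: "nat \<Rightarrow> real" assumes s: "\<And>i. i < n \<Longrightarrow> s i \<ge> 0"
  shows "(\<Sum>i<n. s i ^ 2)^2 \<le> (\<Sum>i<n. s i) * (\<Sum>i<n. s i ^ 3)"
proof -
  have "(\<Sum>i<n. sqrt (s i) * (s i * sqrt (s i)))^2 \<le> (\<Sum>i<n. (sqrt (s i))^2) * (\<Sum>i<n. (s i * sqrt (s i))^2)"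
    by (rule cs_real) simp
  moreover have "(\<Sum>i<n. sqrt (s i) * (s i * sqrt (s i))) = (\<Sum>i<n. s i ^ 2)"
    using s by (intro sum.cong refl) (simp add: power2_eq_square algebra_simps)
  moreover have "(\<Sum>i<n. (sqrt (s i))^2) = (\<Sum>i<n. s i)"
    using s by (intro sum.cong refl) simp
  moreover have "(\<Sum>i<n. (s i * sqrt (s i))^2) = (\<Sum>i<n. s i ^ 3)"
    using s by (intro sum.cong refl) (simp add: power_mult_distrib power3_eq_cube power2_eq_square)
  ultimately show ?thesis by simp
qed

lemma main_ineq:
  fixes M :: "complex mat" and x y :: "nat \<Rightarrow> nat \<Rightarrow> complex" and p :: "nat \<Rightarrow> real"
  assumes M: "M \<in> carrier_mat m1 m2"
    and Mdef: "\<And>i j. i < m1 \<Longrightarrow> j < m2 \<Longrightarrow> M $$ (i,j) = (\<Sum>k<K. complex_of_real (p k) * x k i * y k j)"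
    and p: "\<And>k. k < K \<Longrightarrow> p k \<ge> 0" and ps: "(\<Sum>k<K. p k) = 1"
    and bx: "\<And>k. k < K \<Longrightarrow> (\<Sum>i<m1. (cmod (x k i))^2) \<le> X"
    and bY: "\<And>k. k < K \<Longrightarrow> (\<Sum>j<m2. (cmod (y k j))^2) \<le> Y"
    and C: "sqrt X * sqrt Y \<le> c"
  shows "(tr_half_pow M 2)^2 \<le> c * tr_half_pow M 3"
proof -
  have "psd m1 (M * mat_adjoint M)" by (rule psd_MMadj[OF M])
  then obtain U e where Ue: "unitary m1 U" "M * mat_adjoint M = U * dmat m1 e * mat_adjoint U" "\<forall>i<m1. e i \<ge> 0"
    using psd_spectral by blast
  have e: "\<And>i. i < m1 \<Longrightarrow> e i \<ge> 0" using Ue(3) by auto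
  have tk: "tr_half_pow M k = (\<Sum>i<m1. sqrt (e i) ^ k)" for k
    by (rule tr_half_pow_formula[OF Ue(1) e Ue(2)])
  have a1: "(\<Sum>i<m1. sqrt (e i)) \<le> c"
  proof -
    have "(\<Sum>i<m1. sqrt (e i)) \<le> (\<Sum>k<K. p k * (sqrt (\<Sum>i<m1. (cmod (x k i))^2) * sqrt (\<Sum>j<m2. (cmod (y k j))^2)))"
      by (rule trace_norm_bound[OF M Mdef p Ue(1) e Ue(2)])
    also have "\<dots> \<le> (\<Sum>k<K. p k * (sqrt X * sqrt Y))"
    proof (intro sum_mono mult_left_mono)
      fix k assume k: "k \<in> {..<K}"
      show "sqrt (\<Sum>i<m1. (cmod (x k i))^2) * sqrt (\<Sum>j<m2. (cmod (y k j))^2) \<le> sqrt X * sqrt Y"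
      proof -
        have hx: "0 \<le> (\<Sum>i<m1. (cmod (x k i))^2)" by (intro sum_nonneg) auto
        have hy: "0 \<le> (\<Sum>j<m2. (cmod (y k j))^2)" by (intro sum_nonneg) auto
        have X0: "0 \<le> X" using hx bx[of k] k by auto
        show ?thesis
          by (rule mult_mono) (use bx[of k] bY[of k] k hy X0 in \<open>auto intro: real_sqrt_le_mono\<close>)
      qed
      show "0 \<le> p k" using p k by auto
    qed
    also have "\<dots> = sqrt X * sqrt Y" using ps by (simp add: sum_distrib_right[symmetric])
    finally show ?thesis using C by linarith
  qed
  have pw: "(\<Sum>i<m1. sqrt (e i) ^ 2)^2 \<le> (\<Sum>i<m1. sqrt (e i)) * (\<Sum>i<m1. sqrt (e i) ^ 3)"
    by (rule power_sum_ineq) (simp add: e)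
  have a3: "(\<Sum>i<m1. sqrt (e i) ^ 3) \<ge> 0" by (intro sum_nonneg) (simp add: e)
  have "(\<Sum>i<m1. sqrt (e i)) * (\<Sum>i<m1. sqrt (e i) ^ 3) \<le> c * (\<Sum>i<m1. sqrt (e i) ^ 3)"
    using a1 a3 by (rule mult_right_mono)
  then show ?thesis unfolding tk using pw by linarith
qed

lemma const_eq: fixes a b u v :: real assumes a: "a > 0" and b: "b > 0" and u: "u \<ge> 0" and v: "v \<ge> 0"
  shows "sqrt (u / (2 * a^2)) * sqrt (v / (2 * b^2)) = sqrt (u * v) / (2 * a * b)"
proof -
  have "sqrt (u / (2 * a^2)) * sqrt (v / (2 * b^2)) = sqrt (u * v / ((2 * a * b)^2))"
    by (simp add: real_sqrt_mult[symmetric] power_mult_distrib field_simps)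
  also have "\<dots> = sqrt (u * v) / sqrt ((2 * a * b)^2)" by (simp add: real_sqrt_divide)
  also have "sqrt ((2 * a * b)^2) = 2 * a * b" using a b by simp
  finally show ?thesis .
qed


theorem theorem1:
  fixes d1 d2 :: nat and L1 L2 :: "nat \<Rightarrow> complex mat" and \<rho> :: "complex mat"
  assumes "d1 \<ge> 2" and "d2 \<ge> 2"
    and "su_generators d1 L1" and "su_generators d2 L2"
    and "is_state (d1 * d2) \<rho>"
    and "separable d1 d2 \<rho>"
  shows "(tr_half_pow (corr_mat d1 d2 L1 L2 \<rho>) 2)^2
           \<le> sqrt (real ((d1^2 - d1) * (d2^2 - d2))) / (2 * real d1 * real d2)
             * tr_half_pow (corr_mat d1 d2 L1 L2 \<rho>) 3
       \<and> (tr_half_pow (canon_corr_mat d1 d2 L1 L2 \<rho>) 2)^2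
           \<le> sqrt (real ((2 + d1^2 - d1) * (2 + d2^2 - d2))) / (2 * real d1 * real d2)
             * tr_half_pow (canon_corr_mat d1 d2 L1 L2 \<rho>) 3"
proof -
  note d1 = assms(1) and d2 = assms(2) and L1 = assms(3) and L2 = assms(4)
  obtain m :: nat and p :: "nat \<Rightarrow> real" and A B :: "nat \<Rightarrow> complex mat" where
    sep: "\<forall>k<m. 0 \<le> p k \<and> is_state d1 (A k) \<and> is_state d2 (B k)" "(\<Sum>k<m. p k) = 1"
      "\<rho> = mat (d1 * d2) (d1 * d2) (\<lambda>ij. \<Sum>k<m. complex_of_real (p k) * kron (A k) (B k) $$ ij)"
    using assms(6) unfolding separable_def by blast
  define N1 where "N1 = d1^2 - 1"
  define N2 where "N2 = d2^2 - 1"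
  have p: "\<And>k. k < m \<Longrightarrow> p k \<ge> 0" using sep(1) by auto
  have As: "\<And>k. k < m \<Longrightarrow> is_state d1 (A k)" and Bs: "\<And>k. k < m \<Longrightarrow> is_state d2 (B k)" using sep(1) by auto
  have Ac: "\<And>k. k < m \<Longrightarrow> A k \<in> carrier_mat d1 d1" using As unfolding is_state_def psd_def by auto
  have Bc: "\<And>k. k < m \<Longrightarrow> B k \<in> carrier_mat d2 d2" using Bs unfolding is_state_def psd_def by auto
  have At: "\<And>k. k < m \<Longrightarrow> mtrace (A k) = 1" using As unfolding is_state_def by auto
  have Bt: "\<And>k. k < m \<Longrightarrow> mtrace (B k) = 1" using Bs unfolding is_state_def by auto
  have L1c: "\<And>i. i < N1 \<Longrightarrow> L1 i \<in> carrier_mat d1 d1" using L1 unfolding su_generators_def N1_def by auto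
  have L2c: "\<And>i. i < N2 \<Longrightarrow> L2 i \<in> carrier_mat d2 d2" using L2 unfolding su_generators_def N2_def by auto
  have trrho: "mtrace (\<rho> * kron P Q) = (\<Sum>k<m. complex_of_real (p k) * (mtrace (A k * P) * mtrace (B k * Q)))"
    if "P \<in> carrier_mat d1 d1" "Q \<in> carrier_mat d2 d2" for P Q
    by (rule sep_trace[OF sep(3) _ that]) (use Ac Bc in auto)
  define x where "x k i = mtrace (A k * L1 i) / 2" for k i
  define y where "y k j = mtrace (B k * L2 j) / 2" for k j
  have d1r: "real d1 > 0" and d2r: "real d2 > 0" using d1 d2 by auto
  have Tent: "corr_mat d1 d2 L1 L2 \<rho> $$ (i,j) = (\<Sum>k<m. complex_of_real (p k) * x k i * y k j)"
    if ij: "i < N1" "j < N2" for i j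
  proof -
    have "corr_mat d1 d2 L1 L2 \<rho> $$ (i,j) = mtrace (\<rho> * kron (L1 i) (L2 j)) / 4"
      unfolding corr_mat_def using ij N1_def N2_def by simp
    also have "\<dots> = (\<Sum>k<m. complex_of_real (p k) * (mtrace (A k * L1 i) * mtrace (B k * L2 j))) / 4"
      using trrho[OF L1c[OF ij(1)] L2c[OF ij(2)]] by simp
    also have "\<dots> = (\<Sum>k<m. complex_of_real (p k) * x k i * y k j)"
      unfolding x_def y_def by (simp add: sum_divide_distrib mult_ac)
    finally show ?thesis .
  qed
  have Tc: "corr_mat d1 d2 L1 L2 \<rho> \<in> carrier_mat N1 N2" unfolding corr_mat_def N1_def N2_def by simp
  have bx: "(\<Sum>i<N1. (cmod (x k i))^2) \<le> (real d1 - 1) / (2 * real d1)" if "k < m" for k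
    unfolding x_def N1_def using bloch_bound[of d1 L1 "A k"] d1 L1 As[OF that] by simp
  have bY: "(\<Sum>j<N2. (cmod (y k j))^2) \<le> (real d2 - 1) / (2 * real d2)" if "k < m" for k
    unfolding y_def N2_def using bloch_bound[of d2 L2 "B k"] d2 L2 Bs[OF that] by simp
  have X1: "(real d1 - 1) / (2 * real d1) = (real d1^2 - real d1) / (2 * real d1^2)"
    using d1r by (simp add: field_simps power2_eq_square)
  have Y1: "(real d2 - 1) / (2 * real d2) = (real d2^2 - real d2) / (2 * real d2^2)"
    using d2r by (simp add: field_simps power2_eq_square)
  have le1: "d1 \<le> d1^2" "d2 \<le> d2^2" by (simp_all add: power2_eq_square)
  have u1: "real d1^2 - real d1 \<ge> 0" "real d2^2 - real d2 \<ge> 0" using le1 by (simp_all flip: of_nat_power)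
  have C1: "sqrt ((real d1 - 1) / (2 * real d1)) * sqrt ((real d2 - 1) / (2 * real d2))
      \<le> sqrt (real ((d1^2 - d1) * (d2^2 - d2))) / (2 * real d1 * real d2)"
  proof -
    have "real ((d1^2 - d1) * (d2^2 - d2)) = (real d1^2 - real d1) * (real d2^2 - real d2)"
      using le1 by (simp add: of_nat_diff)
    then show ?thesis unfolding X1 Y1 using const_eq[OF d1r d2r u1] by simp
  qed
  have part1: "(tr_half_pow (corr_mat d1 d2 L1 L2 \<rho>) 2)^2
           \<le> sqrt (real ((d1^2 - d1) * (d2^2 - d2))) / (2 * real d1 * real d2)
             * tr_half_pow (corr_mat d1 d2 L1 L2 \<rho>) 3"
    by (rule main_ineq[OF Tc Tent p sep(2) bx bY C1])
  define xt where "xt k i = (if i = 0 then complex_of_real (1 / real d1) else x k (i - 1))" for k i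
  define yt where "yt k j = (if j = 0 then complex_of_real (1 / real d2) else y k (j - 1))" for k j
  have sq1: "d1^2 = Suc N1" and sq2: "d2^2 = Suc N2" using d1 d2 unfolding N1_def N2_def
    by (simp_all add: power2_eq_square)
  have psum: "(\<Sum>k<m. complex_of_real (p k)) = 1" using sep(2) by (metis of_real_1 of_real_sum)
  have Ttent: "canon_corr_mat d1 d2 L1 L2 \<rho> $$ (i,j) = (\<Sum>k<m. complex_of_real (p k) * xt k i * yt k j)"
    if ij: "i < d1^2" "j < d2^2" for i j
  proof -
    have ent: "canon_corr_mat d1 d2 L1 L2 \<rho> $$ (i,j) =
      (if i = 0 \<and> j = 0 then 1 / (of_nat d1 * of_nat d2)
              else if i = 0 then bloch_s d1 d2 L2 \<rho> (j - 1)
              else if j = 0 then bloch_r d1 d2 L1 \<rho> (i - 1)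
              else corr_mat d1 d2 L1 L2 \<rho> $$ (i - 1, j - 1))"
      unfolding canon_corr_mat_def using ij by simp
    show ?thesis
    proof (cases "i = 0")
      case i0: True
      show ?thesis
      proof (cases "j = 0")
        case True
        have "(\<Sum>k<m. complex_of_real (p k) * xt k i * yt k j) = (\<Sum>k<m. complex_of_real (p k)) * (1 / (of_nat d1 * of_nat d2))"
          unfolding xt_def yt_def using i0 True by (simp add: sum_distrib_right sum_divide_distrib)
        then show ?thesis using ent i0 True psum by simp
      next
        case False
        have jN: "j - 1 < N2" using ij False sq2 by simp
        have "bloch_s d1 d2 L2 \<rho> (j - 1) = mtrace (\<rho> * kron (1\<^sub>m d1) (L2 (j - 1))) / (2 * of_nat d1)"
          unfolding bloch_s_def ..
        also have "\<dots> = (\<Sum>k<m. complex_of_real (p k) * (mtrace (A k * 1\<^sub>m d1) * mtrace (B k * L2 (j - 1)))) / (2 * of_nat d1)"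
          using trrho[OF one_carrier_mat L2c[OF jN]] by simp
        also have "\<dots> = (\<Sum>k<m. complex_of_real (p k) * xt k i * yt k j)"
          unfolding sum_divide_distrib
        proof (intro sum.cong refl)
          fix k assume "k \<in> {..<m}"
          then have k: "k < m" by simp
          have "mtrace (A k * 1\<^sub>m d1) = 1" using At[OF k] Ac[OF k] by simp
          then show "complex_of_real (p k) * (mtrace (A k * 1\<^sub>m d1) * mtrace (B k * L2 (j - 1))) / (2 * of_nat d1) =
            complex_of_real (p k) * xt k i * yt k j"
            unfolding xt_def yt_def y_def using i0 False by simp
        qed
        finally show ?thesis using ent i0 False by simp
      qed
    next
      case i0: False
      have iN: "i - 1 < N1" using ij i0 sq1 by simp
      show ?thesis
      proof (cases "j = 0")
        case True
        have "bloch_r d1 d2 L1 \<rho> (i - 1) = mtrace (\<rho> * kron (L1 (i - 1)) (1\<^sub>m d2)) / (2 * of_nat d2)"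
          unfolding bloch_r_def ..
        also have "\<dots> = (\<Sum>k<m. complex_of_real (p k) * (mtrace (A k * L1 (i - 1)) * mtrace (B k * 1\<^sub>m d2))) / (2 * of_nat d2)"
          using trrho[OF L1c[OF iN] one_carrier_mat] by simp
        also have "\<dots> = (\<Sum>k<m. complex_of_real (p k) * xt k i * yt k j)"
          unfolding sum_divide_distrib
        proof (intro sum.cong refl)
          fix k assume "k \<in> {..<m}"
          then have k: "k < m" by simp
          have "mtrace (B k * 1\<^sub>m d2) = 1" using Bt[OF k] Bc[OF k] by simp
          then show "complex_of_real (p k) * (mtrace (A k * L1 (i - 1)) * mtrace (B k * 1\<^sub>m d2)) / (2 * of_nat d2) =
            complex_of_real (p k) * xt k i * yt k j"
            unfolding xt_def yt_def x_def using i0 True by simp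
        qed
        finally show ?thesis using ent i0 True by simp
      next
        case False
        have jN: "j - 1 < N2" using ij False sq2 by simp
        have "corr_mat d1 d2 L1 L2 \<rho> $$ (i - 1, j - 1) = (\<Sum>k<m. complex_of_real (p k) * xt k i * yt k j)"
          unfolding Tent[OF iN jN] xt_def yt_def using i0 False by simp
        then show ?thesis using ent i0 False by simp
      qed
    qed
  qed
  have Ttc: "canon_corr_mat d1 d2 L1 L2 \<rho> \<in> carrier_mat (d1^2) (d2^2)" unfolding canon_corr_mat_def by simp
  have bxt: "(\<Sum>i<d1^2. (cmod (xt k i))^2) \<le> (2 + real d1^2 - real d1) / (2 * real d1^2)" if "k < m" for k
  proof -
    have "(\<Sum>i<d1^2. (cmod (xt k i))^2) = (cmod (xt k 0))^2 + (\<Sum>i<N1. (cmod (xt k (Suc i)))^2)"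
      unfolding sq1 by (rule sum.lessThan_Suc_shift)
    also have "\<dots> = 1 / real d1^2 + (\<Sum>i<N1. (cmod (x k i))^2)"
      unfolding xt_def using d1r by (simp add: power_divide norm_divide)
    also have "\<dots> \<le> 1 / real d1^2 + (real d1 - 1) / (2 * real d1)" using bx[OF that] by simp
    also have "\<dots> = (2 + real d1^2 - real d1) / (2 * real d1^2)"
      using d1r by (simp add: field_simps power2_eq_square)
    finally show ?thesis .
  qed
  have byt: "(\<Sum>j<d2^2. (cmod (yt k j))^2) \<le> (2 + real d2^2 - real d2) / (2 * real d2^2)" if "k < m" for k
  proof -
    have "(\<Sum>j<d2^2. (cmod (yt k j))^2) = (cmod (yt k 0))^2 + (\<Sum>j<N2. (cmod (yt k (Suc j)))^2)"
      unfolding sq2 by (rule sum.lessThan_Suc_shift)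
    also have "\<dots> = 1 / real d2^2 + (\<Sum>j<N2. (cmod (y k j))^2)"
      unfolding yt_def using d2r by (simp add: power_divide norm_divide)
    also have "\<dots> \<le> 1 / real d2^2 + (real d2 - 1) / (2 * real d2)" using bY[OF that] by simp
    also have "\<dots> = (2 + real d2^2 - real d2) / (2 * real d2^2)"
      using d2r by (simp add: field_simps power2_eq_square)
    finally show ?thesis .
  qed
  have le2: "d1 \<le> 2 + d1^2" "d2 \<le> 2 + d2^2" using le1 by auto
  have u21: "2 + real d1^2 - real d1 \<ge> 0" using u1(1) by linarith
  have u22: "2 + real d2^2 - real d2 \<ge> 0" using u1(2) by linarith
  note u2 = u21 u22
  have C2: "sqrt ((2 + real d1^2 - real d1) / (2 * real d1^2)) * sqrt ((2 + real d2^2 - real d2) / (2 * real d2^2))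
      \<le> sqrt (real ((2 + d1^2 - d1) * (2 + d2^2 - d2))) / (2 * real d1 * real d2)"
  proof -
    have "real ((2 + d1^2 - d1) * (2 + d2^2 - d2)) = (2 + real d1^2 - real d1) * (2 + real d2^2 - real d2)"
      using le2 by (simp add: of_nat_diff)
    then show ?thesis using const_eq[OF d1r d2r u2] by simp
  qed
  have part2: "(tr_half_pow (canon_corr_mat d1 d2 L1 L2 \<rho>) 2)^2
           \<le> sqrt (real ((2 + d1^2 - d1) * (2 + d2^2 - d2))) / (2 * real d1 * real d2)
             * tr_half_pow (canon_corr_mat d1 d2 L1 L2 \<rho>) 3"
    by (rule main_ineq[OF Ttc Ttent p sep(2) bxt byt C2])
  show ?thesis using part1 part2 by blast
qed

end
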